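(* Let $T$ be a positive integer and $M$ a complex vector space. Let $A(x_1,x_2)\in M((x_1^{1/T}))((x_2^{1/T}))$, $B(x_2,x_1)\in M((x_2^{1/T}))((x_1^{1/T}))$ and $C(x_2,x_0)\in M((x_2^{1/T}))((x_0))$. Then the following three conditions are equivalent. (1) There is $F\in M[[x_1^{1/T},x_2^{1/T}]][x_1^{-1/T},x_2^{-1/T},(x_1-x_2)^{-1}]$ with $\iota_{x_1,x_2}F=A(x_1,x_2)$, $\iota_{x_2,x_1}F=B(x_2,x_1)$ and $\iota_{x_2,x_1-x_2}F=C(x_2,x_1-x_2)$. (2) There are $C^{[s]}(x_2,x_0)\in M((x_2^{1/T}))((x_0))$, $s=0,\dots,T-1$, with $\sum_{s=0}^{T-1}C^{[s]}=C$ and, for every $s$, $$x_0^{-1}\delta\Big(\frac{x_1-x_2}{x_0}\Big)A(x_1,x_2)^{s,x_1}-x_0^{-1}\delta\Big(\frac{-x_2+x_1}{x_0}\Big)B(x_2,x_1)^{s,x_1}=x_1^{-1}\Big(\frac{x_2+x_0}{x_1}\Big)^{-s/T}\delta\Big(\frac{x_2+x_0}{x_1}\Big)C^{[s]}(x_2,x_0).$$ (3) There are positive integers $l,q$ and $C^{[s]}(x_2,x_0)\in M((x_2^{1/T}))((x_0))$, $s=0,\dots,T-1$, with $\sum_{s}C^{[s]}=C$, $(x_1-x_2)^lA(x_1,x_2)=(x_1-x_2)^lB(x_2,x_1)$ in $M[[x_1^{\pm1/T},x_2^{\pm1/T}]]$, and for every $s$ $$\iota_{x_0,x_2}(x_0+x_2)^{-s/T+q}\big(A(x_1,x_2)^{s,x_1}\big)|_{x_1=x_0+x_2}=\iota_{x_2,x_0}(x_2+x_0)^{-s/T+q}C^{[s]}(x_2,x_0)$$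 in $M[[x_0^{\pm1},x_2^{\pm1/T}]]$. Moreover, in this case $F$ and the $C^{[s]}$ ($s=0,\dots,T-1$) are uniquely determined by $A,B,C$ (and the $C^{[s]}$ in (2) and (3) coincide).
   Context: $M((x^{1/T}))$ denotes series $\sum_{i\in\frac1T\mathbb Z}m_ix^i$ with $m_i=0$ for $i$ sufficiently negative. For a series $X(x_1,x_2)=\sum_{i,j\in\frac1T\mathbb Z}X_{ij}x_1^ix_2^j$ (possibly also multiplied by powers $(x_1-x_2)^k$, $k\in\mathbb Z$), $X^{s,x_1}$ denotes the sub-sum over terms whose exponent $i$ of $x_1$ lies in $s/T+\mathbb Z$. The maps $\iota$ are defined on monomials $c\,x_1^jx_2^k(x_1-x_2)^l$ ($c\in M$, $j,k\in\frac1T\mathbb Z$, $l\in\mathbb Z$) and extended linearly: $\iota_{x_1,x_2}$ gives $\sum_{i\ge0}\binom li(-1)^ic\,x_1^{j+l-i}x_2^{k+i}$; $\iota_{x_2,x_1}$ gives $\sum_{i\ge0}\binom li(-1)^{l-i}c\,x_2^{k+l-i}x_1^{j+i}$; $\iota_{x_2,x_1-x_2}$ gives $\sum_{i\ge0}\binom ji c\,x_2^{k+j-i}(x_1-x_2)^{l+i}$. $\delta(z)=\sum_{n\in\mathbb Z}z^n$, and binomial expressions $(x_2+x_0)^{c}$, $(x_1-x_2)^c$ etc. are expanded in nonnegative integer powers of the second variable; $\iota_{x_0,x_2}$ means expansion in nonnegative powers of $x_2$ and $\iota_{x_2,x_0}$ in nonnegative powers of $x_0$. *)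

theory Defs
  imports "HOL-Analysis.Analysis" "HOL-Library.Groups_Big_Fun"
begin

(* M is a complex vector space given by an abelian group 'm with scalar multiplication
   sc :: complex => 'm => 'm satisfying vector_space sc.
   A series in x1^{1/T}, x2^{1/T} is a function X :: int => int => 'm, X a b being the
   coefficient of x1^{a/T} x2^{b/T}.  A series C(x2,x0) is C :: int => int => 'm, C b n being
   the coefficient of x2^{b/T} x0^n.  Three-variable series (x0 integral, x1,x2 fractional)
   are functions m a b (coefficient of x0^m x1^{a/T} x2^{b/T}).
   Infinite sums that are formally finite are written with Sum_any (sum over the support). *)

(* X i j = coefficient of y^i z^j;  laurent2 X  <->  X in M((y))((z)) *)
definition laurent2 :: "(int \<Rightarrow> int \<Rightarrow> 'm::zero) \<Rightarrow> bool" where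
  "laurent2 X \<longleftrightarrow> (\<exists>N. \<forall>i j. j < N \<longrightarrow> X i j = 0) \<and> (\<forall>j. \<exists>N. \<forall>i. i < N \<longrightarrow> X i j = 0)"

definition psupp :: "(int \<Rightarrow> int \<Rightarrow> 'm::zero) \<Rightarrow> bool" where
  "psupp G \<longleftrightarrow> (\<forall>a b. a < 0 \<or> b < 0 \<longrightarrow> G a b = 0)"

definition proj1 :: "nat \<Rightarrow> nat \<Rightarrow> (int \<Rightarrow> int \<Rightarrow> 'm::zero) \<Rightarrow> int \<Rightarrow> int \<Rightarrow> 'm" where
  "proj1 T s X = (\<lambda>a b. if a mod int T = int s then X a b else 0)"

(* F = x1^{-p/T} x2^{-r/T} (x1-x2)^{-k} G, G a power series.
   Images of F under the three iota maps. *)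
definition iota12 :: "(complex \<Rightarrow> 'm \<Rightarrow> 'm) \<Rightarrow> nat \<Rightarrow> (int \<Rightarrow> int \<Rightarrow> 'm::ab_group_add)
    \<Rightarrow> nat \<Rightarrow> nat \<Rightarrow> nat \<Rightarrow> int \<Rightarrow> int \<Rightarrow> 'm" where
  "iota12 sc T G p r k = (\<lambda>\<alpha> \<beta>. Sum_any (\<lambda>i::nat.
      sc ((-1)^i * ((- of_nat k) gchoose i))
         (G (\<alpha> + int p + int T * (int k + int i)) (\<beta> + int r - int T * int i))))"

definition iota21 :: "(complex \<Rightarrow> 'm \<Rightarrow> 'm) \<Rightarrow> nat \<Rightarrow> (int \<Rightarrow> int \<Rightarrow> 'm::ab_group_add)
    \<Rightarrow> nat \<Rightarrow> nat \<Rightarrow> nat \<Rightarrow> int \<Rightarrow> int \<Rightarrow> 'm" where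
  "iota21 sc T G p r k = (\<lambda>\<alpha> \<beta>. Sum_any (\<lambda>i::nat.
      sc ((-1)^(k + i) * ((- of_nat k) gchoose i))
         (G (\<alpha> + int p - int T * int i) (\<beta> + int r + int T * (int k + int i)))))"

(* result indexed (x2-exponent * T, x0-exponent) with x0 = x1 - x2 *)
definition iota2d :: "(complex \<Rightarrow> 'm \<Rightarrow> 'm) \<Rightarrow> nat \<Rightarrow> (int \<Rightarrow> int \<Rightarrow> 'm::ab_group_add)
    \<Rightarrow> nat \<Rightarrow> nat \<Rightarrow> nat \<Rightarrow> int \<Rightarrow> int \<Rightarrow> 'm" where
  "iota2d sc T G p r k = (\<lambda>\<beta> n. if n + int k < 0 then 0 else Sum_any (\<lambda>a::int.
      sc ((of_int (a - int p) / of_nat T) gchoose nat (n + int k))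
         (G a (\<beta> + int r + int p + int T * (n + int k) - a))))"

(* coefficients of x1^{p/T} x2^{r/T} (x1-x2)^k X *)
definition polymul :: "(complex \<Rightarrow> 'm \<Rightarrow> 'm) \<Rightarrow> nat \<Rightarrow> (int \<Rightarrow> int \<Rightarrow> 'm::ab_group_add)
    \<Rightarrow> nat \<Rightarrow> nat \<Rightarrow> nat \<Rightarrow> int \<Rightarrow> int \<Rightarrow> 'm" where
  "polymul sc T X p r k = (\<lambda>a b. \<Sum>i\<le>k.
      sc ((-1)^i * of_nat (k choose i))
         (X (a - int p - int T * (int k - int i)) (b - int r - int T * int i)))"

(* equality of two elements of M[[x1^{1/T},x2^{1/T}]][x1^{-1/T},x2^{-1/T},(x1-x2)^{-1}] *)
definition Feq :: "(complex \<Rightarrow> 'm \<Rightarrow> 'm) \<Rightarrow> nat \<Rightarrow> (int \<Rightarrow> int \<Rightarrow> 'm::ab_group_add) \<Rightarrow> nat \<Rightarrow> nat \<Rightarrow> nat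
    \<Rightarrow> (int \<Rightarrow> int \<Rightarrow> 'm) \<Rightarrow> nat \<Rightarrow> nat \<Rightarrow> nat \<Rightarrow> bool" where
  "Feq sc T G p r k G' p' r' k' \<longleftrightarrow> polymul sc T G p' r' k' = polymul sc T G' p r k"

(* x0^{-1} delta((x1-x2)/x0) X(x1,x2), indexed (x0-exp, T*x1-exp, T*x2-exp) *)
definition deltaA :: "(complex \<Rightarrow> 'm \<Rightarrow> 'm) \<Rightarrow> nat \<Rightarrow> (int \<Rightarrow> int \<Rightarrow> 'm::ab_group_add)
    \<Rightarrow> int \<Rightarrow> int \<Rightarrow> int \<Rightarrow> 'm" where
  "deltaA sc T X = (\<lambda>m \<alpha> \<beta>. let n = - m - 1 in Sum_any (\<lambda>i::nat.
      sc ((-1)^i * (of_int n gchoose i))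
         (X (\<alpha> - int T * (n - int i)) (\<beta> - int T * int i))))"

(* x0^{-1} delta((-x2+x1)/x0) Y(x2,x1), Y stored as Y (T*x1-exp) (T*x2-exp) *)
definition deltaB :: "(complex \<Rightarrow> 'm \<Rightarrow> 'm) \<Rightarrow> nat \<Rightarrow> (int \<Rightarrow> int \<Rightarrow> 'm::ab_group_add)
    \<Rightarrow> int \<Rightarrow> int \<Rightarrow> int \<Rightarrow> 'm" where
  "deltaB sc T Y = (\<lambda>m \<alpha> \<beta>. let n = - m - 1 in Sum_any (\<lambda>i::nat.
      sc ((-1) powi (n - int i) * (of_int n gchoose i))
         (Y (\<alpha> - int T * int i) (\<beta> - int T * (n - int i)))))"

(* x1^{-1} ((x2+x0)/x1)^{-s/T} delta((x2+x0)/x1) C(x2,x0) *)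
definition deltaC :: "(complex \<Rightarrow> 'm \<Rightarrow> 'm) \<Rightarrow> nat \<Rightarrow> nat \<Rightarrow> (int \<Rightarrow> int \<Rightarrow> 'm::ab_group_add)
    \<Rightarrow> int \<Rightarrow> int \<Rightarrow> int \<Rightarrow> 'm" where
  "deltaC sc T s C = (\<lambda>m \<alpha> \<beta>. if (\<alpha> - int s) mod int T \<noteq> 0 then 0 else
      (let n = - ((\<alpha> - int s) div int T) - 1 in Sum_any (\<lambda>i::nat.
        sc ((of_int n - of_nat s / of_nat T) gchoose i)
           (C (\<beta> - (int T * n - int s - int T * int i)) (m - int i)))))"

(* iota_{x0,x2} (x0+x2)^{-s/T+q} X(x1,x2)|_{x1=x0+x2}, X supported on x1-exponents in s/T+Z;
   indexed (x0-exp, T*x2-exp) *)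
definition substA :: "(complex \<Rightarrow> 'm \<Rightarrow> 'm) \<Rightarrow> nat \<Rightarrow> nat \<Rightarrow> nat \<Rightarrow> (int \<Rightarrow> int \<Rightarrow> 'm::ab_group_add)
    \<Rightarrow> int \<Rightarrow> int \<Rightarrow> 'm" where
  "substA sc T s q X = (\<lambda>m \<gamma>. Sum_any (\<lambda>j::nat.
      sc (of_int (m + int j) gchoose j)
         (X (int T * (m + int j - int q) + int s) (\<gamma> - int T * int j))))"

(* iota_{x2,x0} (x2+x0)^{-s/T+q} C(x2,x0); indexed (x0-exp, T*x2-exp) *)
definition expC :: "(complex \<Rightarrow> 'm \<Rightarrow> 'm) \<Rightarrow> nat \<Rightarrow> nat \<Rightarrow> nat \<Rightarrow> (int \<Rightarrow> int \<Rightarrow> 'm::ab_group_add)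
    \<Rightarrow> int \<Rightarrow> int \<Rightarrow> 'm" where
  "expC sc T s q C = (\<lambda>m \<gamma>. Sum_any (\<lambda>j::nat.
      sc ((of_nat q - of_nat s / of_nat T) gchoose j)
         (C (\<gamma> - (int T * int q - int s - int T * int j)) (m - int j))))"

(* condition (1) for a given representative of F *)
definition isF :: "(complex \<Rightarrow> 'm \<Rightarrow> 'm) \<Rightarrow> nat \<Rightarrow> (int \<Rightarrow> int \<Rightarrow> 'm::ab_group_add)
    \<Rightarrow> (int \<Rightarrow> int \<Rightarrow> 'm) \<Rightarrow> (int \<Rightarrow> int \<Rightarrow> 'm) \<Rightarrow> (int \<Rightarrow> int \<Rightarrow> 'm) \<Rightarrow> nat \<Rightarrow> nat \<Rightarrow> nat \<Rightarrow> bool" where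
  "isF sc T A B C G p r k \<longleftrightarrow> psupp G \<and> iota12 sc T G p r k = A \<and> iota21 sc T G p r k = B
      \<and> iota2d sc T G p r k = C"

definition isC2 :: "(complex \<Rightarrow> 'm \<Rightarrow> 'm) \<Rightarrow> nat \<Rightarrow> (int \<Rightarrow> int \<Rightarrow> 'm::ab_group_add)
    \<Rightarrow> (int \<Rightarrow> int \<Rightarrow> 'm) \<Rightarrow> (int \<Rightarrow> int \<Rightarrow> 'm) \<Rightarrow> (nat \<Rightarrow> int \<Rightarrow> int \<Rightarrow> 'm) \<Rightarrow> bool" where
  "isC2 sc T A B C Cs \<longleftrightarrow> (\<forall>s<T. laurent2 (Cs s)) \<and> (\<lambda>b n. \<Sum>s<T. Cs s b n) = C \<and>
      (\<forall>s<T. (\<lambda>m \<alpha> \<beta>. deltaA sc T (proj1 T s A) m \<alpha> \<beta> - deltaB sc T (proj1 T s B) m \<alpha> \<beta>)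
              = deltaC sc T s (Cs s))"

definition isC3 :: "(complex \<Rightarrow> 'm \<Rightarrow> 'm) \<Rightarrow> nat \<Rightarrow> (int \<Rightarrow> int \<Rightarrow> 'm::ab_group_add)
    \<Rightarrow> (int \<Rightarrow> int \<Rightarrow> 'm) \<Rightarrow> (int \<Rightarrow> int \<Rightarrow> 'm) \<Rightarrow> (nat \<Rightarrow> int \<Rightarrow> int \<Rightarrow> 'm) \<Rightarrow> bool" where
  "isC3 sc T A B C Cs \<longleftrightarrow> (\<exists>l q. l > 0 \<and> q > 0 \<and>
      (\<forall>s<T. laurent2 (Cs s)) \<and> (\<lambda>b n. \<Sum>s<T. Cs s b n) = C \<and>
      polymul sc T A 0 0 l = polymul sc T B 0 0 l \<and>
      (\<forall>s<T. substA sc T s q (proj1 T s A) = expC sc T s q (Cs s)))"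

end

theory Submission imports Defs begin

context
  fixes sc :: "complex \<Rightarrow> 'm::ab_group_add \<Rightarrow> 'm"
  assumes vs: "vector_space sc"
begin

interpretation V: vector_space sc by (rule vs)

lemma SA_scale: "Sum_any (\<lambda>i. sc c (f i)) = sc c (Sum_any f)"
proof (cases "c = 0")
  case True then show ?thesis by simp
next
  case False
  have eq: "{i. sc c (f i) \<noteq> 0} = {i. f i \<noteq> 0}" using False by simp
  show ?thesis
  proof (cases "finite {i. f i \<noteq> 0}")
    case True
    then show ?thesis
      using False by (simp add: Sum_any.expand_set eq V.scale_sum_right)
  next
    case False
    then show ?thesis using eq by simp
  qed
qed

lemma SA_bound_nat:
  fixes f :: "nat \<Rightarrow> 'm"
  assumes "\<forall>i>K. f i = 0"
  shows "Sum_any f = (\<Sum>i\<le>K. f i)"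
  by (rule Sum_any.expand_superset) (use assms in \<open>auto simp: not_le[symmetric]\<close>)

lemma SA_bound_int:
  fixes f :: "int \<Rightarrow> 'm"
  assumes "\<forall>a. f a \<noteq> 0 \<longrightarrow> L \<le> a \<and> a \<le> U"
  shows "Sum_any f = (\<Sum>a\<in>{L..U}. f a)"
  by (rule Sum_any.expand_superset) (use assms in auto)

lemma conv:
  fixes H :: "nat \<Rightarrow> 'm"
  assumes H: "\<forall>u>K. H u = 0"
  shows "(\<Sum>i\<le>K. sc (c i) (\<Sum>j\<le>K. sc (d j) (H (i+j))))
       = (\<Sum>u\<le>K. sc (\<Sum>i\<le>u. c i * d (u - i)) (H u))"
proof -
  have "(\<Sum>i\<le>K. sc (c i) (\<Sum>j\<le>K. sc (d j) (H (i+j))))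
      = (\<Sum>i\<le>K. \<Sum>j\<le>K. sc (c i * d j) (H (i+j)))"
    by (simp add: V.scale_sum_right)
  also have "\<dots> = (\<Sum>(i,j)\<in>{..K}\<times>{..K}. sc (c i * d j) (H (i+j)))"
    by (simp add: sum.cartesian_product)
  also have "\<dots> = (\<Sum>(i,j)\<in>{(i,j). i+j \<le> K}. sc (c i * d j) (H (i+j)))"
    by (rule sum.mono_neutral_right) (use H in \<open>auto simp flip: not_less\<close>)
  also have "\<dots> = (\<Sum>u\<le>K. \<Sum>i\<le>u. sc (c i * d (u - i)) (H (i + (u - i))))"
    by (rule sum.triangle_reindex_eq)
  also have "\<dots> = (\<Sum>u\<le>K. sc (\<Sum>i\<le>u. c i * d (u - i)) (H u))"
    by (simp add: V.scale_sum_left)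
  finally show ?thesis .
qed

lemma master:
  fixes Z :: "nat \<Rightarrow> 'm"
  assumes H: "\<forall>u>K. Z u = 0"
  shows "Sum_any (\<lambda>i. sc (c i) (Sum_any (\<lambda>j. sc (d j) (Z (i+j)))))
       = (\<Sum>u\<le>K. sc (\<Sum>i\<le>u. c i * d (u - i)) (Z u))"
proof -
  have inner: "Sum_any (\<lambda>j. sc (d j) (Z (i+j))) = (\<Sum>j\<le>K. sc (d j) (Z (i+j)))" for i
    by (rule SA_bound_nat) (use H in auto)
  have z: "(\<Sum>j\<le>K. sc (d j) (Z (i+j))) = 0" if "i > K" for i
    using H that by simp
  have "Sum_any (\<lambda>i. sc (c i) (Sum_any (\<lambda>j. sc (d j) (Z (i+j)))))
      = (\<Sum>i\<le>K. sc (c i) (\<Sum>j\<le>K. sc (d j) (Z (i+j))))"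
    unfolding inner by (rule SA_bound_nat) (use z in auto)
  also have "\<dots> = (\<Sum>u\<le>K. sc (\<Sum>i\<le>u. c i * d (u - i)) (Z u))"
    by (rule conv[OF H])
  finally show ?thesis .
qed

end


section \<open>Combinatorial identities\<close>

lemma vand_signed:
  "(\<Sum>i\<le>u. ((-1)^i * ((a::complex) gchoose i)) * ((-1)^(u-i) * (b gchoose (u-i))))
     = (-1)^u * ((a+b) gchoose u)"
proof -
  have "(\<Sum>i\<le>u. ((-1)^i * (a gchoose i)) * ((-1)^(u-i) * (b gchoose (u-i))))
      = (\<Sum>i\<le>u. (-1)^u * ((a gchoose i) * (b gchoose (u-i))))"
  proof (rule sum.cong)
    fix i assume "i \<in> {..u}"
    then have "(-1::complex)^i * (-1)^(u-i) = (-1)^u"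
      by (simp flip: power_add)
    then show "((-1)^i * (a gchoose i)) * ((-1)^(u-i) * (b gchoose (u-i)))
        = (-1)^u * ((a gchoose i) * (b gchoose (u-i)))"
      by (metis (no_types, lifting) mult.assoc mult.left_commute)
  qed simp
  also have "\<dots> = (-1)^u * ((a+b) gchoose u)"
    by (simp add: sum_distrib_left[symmetric] atMost_atLeast0 gbinomial_Vandermonde)
  finally show ?thesis .
qed

lemma gch_int_nonneg: "0 \<le> z \<Longrightarrow> (of_int z :: complex) gchoose j = of_nat (nat z choose j)"
  by (metis binomial_gbinomial of_int_of_nat_eq int_nat_eq)

lemma gch_int_neg: "z < 0 \<Longrightarrow> (of_int z :: complex) gchoose j
     = (-1)^j * of_nat (nat (int j - z - 1) choose j)"
proof -
  assume z: "z < 0"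
  have "(of_int z :: complex) gchoose j = (-1)^j * ((of_nat j - of_int z - 1) gchoose j)"
    by (rule gbinomial_negated_upper)
  also have "(of_nat j - of_int z - 1 :: complex) = of_int (int j - z - 1)" by simp
  also have "(of_int (int j - z - 1) :: complex) gchoose j = of_nat (nat (int j - z - 1) choose j)"
    using z by (intro gch_int_nonneg) simp
  finally show ?thesis .
qed

lemma powi_neg1: "((-1::complex) powi z) = (if even z then 1 else -1)"
  by (simp add: power_int_minus_left)

lemma pow_neg1: "((-1::complex) ^ n) = (if even n then 1 else -1)"
  by (simp add: minus_one_power_iff)

lemma conv12:
  "(\<Sum>i\<le>u. ((-1)^i * (of_int n gchoose i)) * ((-1)^(u-i) * ((- of_nat k) gchoose (u-i))))
     = (-1)^u * ((of_int (n - int k) :: complex) gchoose u)"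
  by (subst vand_signed) simp

lemma conv21:
  "(\<Sum>i\<le>u. ((-1) powi (n - int i) * (of_int n gchoose i)) *
            ((-1)^(k + (u-i)) * ((- of_nat k) gchoose (u-i))))
     = (-1) powi (n + int k + int u) * ((of_int (n - int k) :: complex) gchoose u)"
proof -
  have "(\<Sum>i\<le>u. ((-1) powi (n - int i) * (of_int n gchoose i)) *
            ((-1)^(k + (u-i)) * ((- of_nat k) gchoose (u-i))))
      = (\<Sum>i\<le>u. ((-1) powi (n + int k + int u) * (-1)^u) * ((-1)^i * (of_int n gchoose i) *
            ((-1)^(u-i) * ((- of_nat k :: complex) gchoose (u-i)))))"
  proof (rule sum.cong)
    fix i assume "i \<in> {..u}"
    then have iu: "i \<le> u" by simp
    have "((-1::complex) powi (n - int i)) * (-1)^(k + (u-i))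
        = (-1) powi (n + int k + int u) * (-1)^u * ((-1)^i * (-1)^(u-i))"
      using iu by (auto simp: powi_neg1 pow_neg1 even_add even_diff of_nat_diff)
    then show "((-1) powi (n - int i) * (of_int n gchoose i)) *
            ((-1)^(k + (u-i)) * ((- of_nat k) gchoose (u-i)))
        = ((-1) powi (n + int k + int u) * (-1)^u) * ((-1)^i * (of_int n gchoose i) *
            ((-1)^(u-i) * ((- of_nat k :: complex) gchoose (u-i))))"
      by (simp add: algebra_simps)
  qed simp
  also have "\<dots> = (-1) powi (n + int k + int u) * ((-1)^u * (-1)^u * ((of_int (n - int k) :: complex) gchoose u))"
    by (simp add: sum_distrib_left[symmetric] conv12)
  also have "(-1::complex)^u * (-1)^u = 1" by (simp flip: power_add)
  finally show ?thesis by simp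
qed

lemma conv_inv1:
  "(\<Sum>i\<le>u. ((-1)^i * of_nat (k choose i)) * ((-1)^(u-i) * ((- of_nat k) gchoose (u-i))))
     = (if u = 0 then 1 else (0::complex))"
  by (simp add: binomial_gbinomial vand_signed gbinomial_0_left)

lemma conv_inv2:
  "(\<Sum>i\<le>u. ((-1)^i * ((- of_nat k) gchoose i)) * ((-1)^(u-i) * of_nat (k choose (u-i))))
     = (if u = 0 then 1 else (0::complex))"
  by (simp add: binomial_gbinomial vand_signed gbinomial_0_left)

lemma conv_inv3:
  "(\<Sum>i\<le>u. ((-1)^(k+i) * ((- of_nat k) gchoose i)) * ((-1)^k * (-1)^(u-i) * of_nat (k choose (u-i))))
     = (if u = 0 then 1 else (0::complex))"
proof -
  have "(\<Sum>i\<le>u. ((-1)^(k+i) * ((- of_nat k) gchoose i)) * ((-1)^k * (-1)^(u-i) * of_nat (k choose (u-i))))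
     = (\<Sum>i\<le>u. ((-1)^k*(-1)^k) * (((-1)^i * ((- of_nat k) gchoose i)) * ((-1)^(u-i) * of_nat (k choose (u-i)))))"
    by (rule sum.cong) (simp_all add: power_add algebra_simps)
  also have "(-1::complex)^k*(-1)^k = 1" by (simp flip: power_add)
  finally show ?thesis by (simp add: conv_inv2)
qed

lemma conv_sub:
  "(\<Sum>j\<le>u. ((of_int (m + int j) :: complex) gchoose j) * ((-1)^(u-j) * ((- of_nat k) gchoose (u-j))))
     = of_int (m + int k + int u) gchoose u"
proof -
  have e1: "((of_int (m + int j) :: complex) gchoose j) = (-1)^j * (of_int (-m-1) gchoose j)" for j
    by (subst gbinomial_negated_upper) simp
  have e2: "((of_int (m + int k + int u) :: complex) gchoose u) = (-1)^u * (of_int (-m-1) + (- of_nat k) gchoose u)"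
    by (subst gbinomial_negated_upper) (simp add: algebra_simps)
  show ?thesis
    unfolding e1 e2 by (rule vand_signed)
qed


context
  fixes sc :: "complex \<Rightarrow> 'm::ab_group_add \<Rightarrow> 'm"
  assumes vs: "vector_space sc"
begin

interpretation V: vector_space sc by (rule vs)

lemma SA_diff:
  assumes "finite S" "\<forall>u. g u \<noteq> 0 \<longrightarrow> u \<in> S"
  shows "Sum_any (\<lambda>u. sc (w1 u) (g u)) - Sum_any (\<lambda>u. sc (w2 u) (g u))
       = Sum_any (\<lambda>u. sc (w1 u - w2 u) (g u))"
proof -
  have e: "Sum_any (\<lambda>u. sc (w u) (g u)) = (\<Sum>u\<in>S. sc (w u) (g u))" for w
    by (rule Sum_any.expand_superset) (use assms in auto)
  show ?thesis unfolding e by (simp add: sum_subtractf V.scale_left_diff_distrib)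
qed

end

lemma SA_reindex:
  fixes f :: "'b \<Rightarrow> 'c::comm_monoid_add" and g :: "'a \<Rightarrow> 'b"
  assumes inj: "inj g" and rng: "\<forall>x. f x \<noteq> 0 \<longrightarrow> x \<in> range g"
  shows "Sum_any f = Sum_any (\<lambda>y. f (g y))"
proof -
  have S: "{x. f x \<noteq> 0} = g ` {y. f (g y) \<noteq> 0}"
    using rng by auto
  show ?thesis
  proof (cases "finite {y. f (g y) \<noteq> 0}")
    case True
    have "Sum_any f = sum f (g ` {y. f (g y) \<noteq> 0})"
      by (simp add: Sum_any.expand_set S)
    also have "\<dots> = sum (\<lambda>y. f (g y)) {y. f (g y) \<noteq> 0}"
      by (rule sum.reindex[unfolded comp_def]) (use inj in \<open>auto intro: inj_on_subset\<close>)
    also have "\<dots> = Sum_any (\<lambda>y. f (g y))"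
      by (simp add: Sum_any.expand_set)
    finally show ?thesis .
  next
    case False
    then have "\<not> finite {x. f x \<noteq> 0}"
      unfolding S using finite_imageD inj inj_on_subset by blast
    then show ?thesis using False by simp
  qed
qed

definition w12 :: "int \<Rightarrow> int \<Rightarrow> complex" where
  "w12 N u = (if 0 \<le> u then (-1)^nat u * (of_int N gchoose nat u) else 0)"
definition w21 :: "int \<Rightarrow> int \<Rightarrow> complex" where
  "w21 N u = (if u \<le> N then (-1) powi u * (of_int N gchoose nat (N - u)) else 0)"
definition wC :: "int \<Rightarrow> int \<Rightarrow> complex" where
  "wC N u = (if N < 0 then of_int (u - N - 1) gchoose nat (-N-1) else 0)"

lemma choose_sym: "a + b = n \<Longrightarrow> (n choose a) = (n choose b)"
  by (metis binomial_symmetric add_diff_cancel_left' le_add1)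

lemma powi_nonneg: "0 \<le> u \<Longrightarrow> ((-1::complex) powi u) = (-1)^nat u"
  by (simp add: power_int_def)

lemma pw_identity: "w12 N u - w21 N u = wC N u"
proof (cases "0 \<le> N")
  case N: True
  consider "u < 0" | "0 \<le> u \<and> u \<le> N" | "N < u" by linarith
  then show ?thesis
  proof cases
    case 1
    have "nat N < nat (N - u)" using 1 N by simp
    then show ?thesis using 1 N
      by (simp add: w12_def w21_def wC_def gch_int_nonneg binomial_eq_0)
  next
    case 2
    have "nat N choose nat (N - u) = nat N choose nat u"
      using 2 binomial_symmetric[of "nat u" "nat N"] nat_mono[of u N] by (simp add: nat_diff_distrib)
    then show ?thesis using 2 N
      by (simp add: w12_def w21_def wC_def gch_int_nonneg powi_nonneg)
  next
    case 3
    have "nat N < nat u" using 3 N by simp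
    then show ?thesis using 3 N
      by (simp add: w12_def w21_def wC_def gch_int_nonneg binomial_eq_0)
  qed
next
  case N: False
  define P where "P = nat (-N-1)"
  have wc: "wC N u = of_int (u - N - 1) gchoose P" using N by (simp add: wC_def P_def)
  consider "0 \<le> u" | "u \<le> N" | "N < u \<and> u < 0" by linarith
  then show ?thesis
  proof cases
    case 1
    have a: "w21 N u = 0" using 1 N by (simp add: w21_def)
    have "w12 N u = (-1)^nat u * ((-1)^nat u * of_nat (nat (int (nat u) - N - 1) choose nat u))"
      using 1 N by (simp add: w12_def gch_int_neg)
    also have "(-1::complex)^nat u * ((-1)^nat u * x) = x" for x
      by (simp add: mult.assoc[symmetric] power_add[symmetric])
    finally have b: "w12 N u = of_nat (nat (u - N - 1) choose nat u)" using 1 by simp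
    have c: "wC N u = of_nat (nat (u - N - 1) choose P)"
      unfolding wc by (rule gch_int_nonneg) (use 1 N in simp)
    have "nat u + P = nat (u - N - 1)" using 1 N unfolding P_def by (simp add: nat_add_distrib[symmetric])
    then have "nat (u - N - 1) choose nat u = nat (u - N - 1) choose P"
      by (rule choose_sym)
    then show ?thesis using a b c by simp
  next
    case 2
    have a: "w12 N u = 0" using 2 N by (simp add: w12_def)
    have b: "w21 N u = (-1) powi u * ((-1)^nat (N-u) * of_nat (nat (- u - 1) choose nat (N - u)))"
      using 2 N by (simp add: w21_def gch_int_neg)
    have c: "wC N u = (-1)^P * of_nat (nat (- u - 1) choose P)"
      unfolding wc by (subst gch_int_neg) (use 2 N in \<open>simp_all add: P_def\<close>)
    have "nat (N - u) + P = nat (- u - 1)" using 2 N unfolding P_def by (simp add: nat_add_distrib[symmetric])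
    then have d: "nat (- u - 1) choose nat (N - u) = nat (- u - 1) choose P"
      by (rule choose_sym)
    have e: "- ((-1::complex) powi u * (-1)^nat (N-u)) = (-1)^P"
      using 2 N by (auto simp: powi_neg1 pow_neg1 P_def even_nat_iff even_add even_diff)
    have "w12 N u - w21 N u = - ((-1) powi u * (-1)^nat (N-u)) * of_nat (nat (- u - 1) choose P)"
      using a b d by (simp add: algebra_simps)
    also have "\<dots> = wC N u" using c e by simp
    finally show ?thesis .
  next
    case 3
    have c: "wC N u = of_nat (nat (u - N - 1) choose P)"
      unfolding wc by (rule gch_int_nonneg) (use 3 N in simp)
    have "nat (u - N - 1) < P" using 3 N by (simp add: P_def)
    then show ?thesis using c 3 N by (simp add: w12_def w21_def binomial_eq_0)
  qed
qed

lemma Tmono1: "0 < T \<Longrightarrow> 0 \<le> x \<Longrightarrow> x \<le> int T * (x::int)"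
proof -
  assume a: "0 < T" "0 \<le> x"
  have "1 * x \<le> int T * x" by (rule mult_right_mono) (use a in auto)
  then show ?thesis by simp
qed

lemma Tmono2: "0 < T \<Longrightarrow> x \<le> 0 \<Longrightarrow> int T * (x::int) \<le> x"
proof -
  assume a: "0 < T" "x \<le> 0"
  have "int T * x \<le> 1 * x" by (rule mult_right_mono_neg) (use a in auto)
  then show ?thesis by simp
qed

context
  fixes sc :: "complex \<Rightarrow> 'm::ab_group_add \<Rightarrow> 'm"
  assumes vs: "vector_space sc"
begin

interpretation V: vector_space sc by (rule vs)

lemma SA_nat_to_int:
  fixes f :: "int \<Rightarrow> 'm"
  assumes "\<forall>u<0. f u = 0"
  shows "Sum_any f = Sum_any (\<lambda>u::nat. f (int u))"
  by (rule SA_reindex) (use assms in \<open>auto simp: inj_on_def image_iff intro!: exI[of _ "nat _"]\<close>)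

lemma E12:
  assumes G: "psupp G" and T: "T > 0"
  shows "deltaA sc T (iota12 sc T G p r k) m \<alpha> \<beta>
    = Sum_any (\<lambda>u::int. sc (w12 (-m-1-int k) u)
        (G (\<alpha> + int p + int T*(int k + m + 1) + int T*u) (\<beta> + int r - int T*u)))"
proof -
  define Z where "Z u = G (\<alpha> + int p + int T*(int k + m + 1) + int T*int u) (\<beta> + int r - int T*int u)" for u :: nat
  define K where "K = nat (\<beta> + int r)"
  have ZK: "\<forall>u>K. Z u = 0"
  proof (intro allI impI)
    fix u assume "u > K"
    then have "int u > \<beta> + int r" unfolding K_def by linarith
    moreover have "int T * int u \<ge> int u" using T by (simp add: Tmono1)
    ultimately show "Z u = 0" using G unfolding Z_def psupp_def by auto
  qed
  have "deltaA sc T (iota12 sc T G p r k) m \<alpha> \<beta>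
      = Sum_any (\<lambda>i. sc ((-1)^i * (of_int (-m-1) gchoose i))
          (Sum_any (\<lambda>j. sc ((-1)^j * ((- of_nat k) gchoose j)) (Z (i+j)))))"
    unfolding deltaA_def iota12_def Let_def Z_def by (simp add: algebra_simps)
  also have "\<dots> = (\<Sum>u\<le>K. sc (\<Sum>i\<le>u. ((-1)^i * (of_int (-m-1) gchoose i)) *
          ((-1)^(u-i) * ((- of_nat k) gchoose (u-i)))) (Z u))"
    by (rule master[OF vs ZK])
  also have "\<dots> = (\<Sum>u\<le>K. sc ((-1)^u * (of_int (-m-1-int k) gchoose u)) (Z u))"
    by (simp only: conv12)
  also have "\<dots> = Sum_any (\<lambda>u. sc ((-1)^u * (of_int (-m-1-int k) gchoose u)) (Z u))"
    by (rule SA_bound_nat[OF vs, symmetric]) (use ZK in simp)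
  also have "\<dots> = Sum_any (\<lambda>u::int. sc (w12 (-m-1-int k) u)
        (G (\<alpha> + int p + int T*(int k + m + 1) + int T*u) (\<beta> + int r - int T*u)))"
    by (subst SA_nat_to_int) (simp_all add: w12_def Z_def)
  finally show ?thesis .
qed

lemma SA_nat_to_int2:
  fixes f :: "int \<Rightarrow> 'm"
  assumes "\<forall>u>N. f u = 0"
  shows "Sum_any f = Sum_any (\<lambda>u::nat. f (N - int u))"
proof (rule SA_reindex)
  show "inj (\<lambda>u::nat. N - int u)" by (auto simp: inj_on_def)
  show "\<forall>x. f x \<noteq> 0 \<longrightarrow> x \<in> range (\<lambda>u::nat. N - int u)"
  proof (intro allI impI)
    fix x assume "f x \<noteq> 0"
    then have "x \<le> N" using assms by (meson not_le)
    then have "x = N - int (nat (N - x))" by simp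
    then show "x \<in> range (\<lambda>u::nat. N - int u)" by blast
  qed
qed

lemma E21:
  assumes G: "psupp G" and T: "T > 0"
  shows "deltaB sc T (iota21 sc T G p r k) m \<alpha> \<beta>
    = Sum_any (\<lambda>u::int. sc (w21 (-m-1-int k) u)
        (G (\<alpha> + int p + int T*(int k + m + 1) + int T*u) (\<beta> + int r - int T*u)))"
proof -
  define Z where "Z u = G (\<alpha> + int p - int T*int u) (\<beta> + int r + int T*(int k + m + 1) + int T*int u)" for u :: nat
  define K where "K = nat (\<alpha> + int p)"
  have ZK: "\<forall>u>K. Z u = 0"
  proof (intro allI impI)
    fix u assume "u > K"
    then have "int u > \<alpha> + int p" unfolding K_def by linarith
    moreover have "int T * int u \<ge> int u" using T by (simp add: Tmono1)
    ultimately show "Z u = 0" using G unfolding Z_def psupp_def by auto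
  qed
  have "deltaB sc T (iota21 sc T G p r k) m \<alpha> \<beta>
      = Sum_any (\<lambda>i. sc ((-1) powi ((-m-1) - int i) * (of_int (-m-1) gchoose i))
          (Sum_any (\<lambda>j. sc ((-1)^(k + j) * ((- of_nat k) gchoose j)) (Z (i+j)))))"
    unfolding deltaB_def iota21_def Let_def Z_def by (simp add: algebra_simps)
  also have "\<dots> = (\<Sum>u\<le>K. sc (\<Sum>i\<le>u. ((-1) powi ((-m-1) - int i) * (of_int (-m-1) gchoose i)) *
          ((-1)^(k + (u-i)) * ((- of_nat k) gchoose (u-i)))) (Z u))"
    by (rule master[OF vs ZK])
  also have "\<dots> = (\<Sum>u\<le>K. sc ((-1) powi ((-m-1) + int k + int u) * (of_int (-m-1-int k) gchoose u)) (Z u))"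
    by (simp only: conv21)
  also have "\<dots> = Sum_any (\<lambda>u. sc ((-1) powi ((-m-1) + int k + int u) * (of_int (-m-1-int k) gchoose u)) (Z u))"
    by (rule SA_bound_nat[OF vs, symmetric]) (use ZK in simp)
  also have "\<dots> = Sum_any (\<lambda>u::int. sc (w21 (-m-1-int k) u)
        (G (\<alpha> + int p + int T*(int k + m + 1) + int T*u) (\<beta> + int r - int T*u)))"
  proof (subst SA_nat_to_int2[where N="-m-1-int k"])
    show "\<forall>u>(-m-1-int k). sc (w21 (-m-1-int k) u)
        (G (\<alpha> + int p + int T*(int k + m + 1) + int T*u) (\<beta> + int r - int T*u)) = 0"
      by (simp add: w21_def)
    have sg: "((-1::complex) powi ((-m-1) + int k + int u)) = (-1) powi (-m-1-int k - int u)" for u :: nat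
      by (auto simp: powi_neg1 even_add even_diff)
    show "Sum_any (\<lambda>u. sc ((-1) powi ((-m-1) + int k + int u) * (of_int (-m-1-int k) gchoose u)) (Z u))
      = Sum_any (\<lambda>u::nat. sc (w21 (-m-1-int k) (-m-1-int k - int u))
        (G (\<alpha> + int p + int T*(int k + m + 1) + int T*(-m-1-int k - int u)) (\<beta> + int r - int T*(-m-1-int k - int u))))"
      by (rule Sum_any.cong, simp only: sg) (simp add: w21_def Z_def algebra_simps)
  qed
  finally show ?thesis .
qed

end

lemma psupp_nz: "psupp H \<Longrightarrow> H a b \<noteq> 0 \<Longrightarrow> 0 \<le> a \<and> 0 \<le> b"
  unfolding psupp_def by (meson not_le)

context
  fixes sc :: "complex \<Rightarrow> 'm::ab_group_add \<Rightarrow> 'm"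
  assumes vs: "vector_space sc"
begin

interpretation V: vector_space sc by (rule vs)

lemma expandC:
  assumes H: "psupp H"
  shows "Sum_any (\<lambda>i::nat. sc ((of_int w - of_nat s / of_nat T) gchoose i)
            (iota2d sc T H p r k (\<beta> - (int T * w - int s - int T * int i)) (m - int i)))
   = (if m + int k < 0 then 0 else Sum_any (\<lambda>a. sc ((of_int w - of_nat s / of_nat T
            + of_int (a - int p) / of_nat T) gchoose nat (m + int k))
         (H a (\<beta> - int T * w + int s + int r + int p + int T * (m + int k) - a))))"
proof (cases "m + int k < 0")
  case True
  then show ?thesis by (simp add: iota2d_def)
next
  case False
  define P where "P = nat (m + int k)"
  define S where "S = \<beta> - int T * w + int s + int r + int p + int T * (m + int k)"
  define c where "c i = (of_int w - of_nat s / of_nat T :: complex) gchoose i" for i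
  define e where "e a j = (of_int (a - int p) / of_nat T :: complex) gchoose j" for a j
  have fin: "Sum_any (\<lambda>a. sc (f a) (H a (S - a))) = (\<Sum>a\<in>{0..S}. sc (f a) (H a (S - a)))" for f
    by (rule SA_bound_int[OF vs]) (use psupp_nz[OF H] in \<open>fastforce\<close>)
  have inner: "iota2d sc T H p r k (\<beta> - (int T * w - int s - int T * int i)) (m - int i)
      = (\<Sum>a\<in>{0..S}. sc (e a (P - i)) (H a (S - a)))" if "i \<le> P" for i
  proof -
    have "iota2d sc T H p r k (\<beta> - (int T * w - int s - int T * int i)) (m - int i)
       = Sum_any (\<lambda>a. sc (e a (P - i)) (H a (S - a)))"
    proof -
      have cond: "\<not> (m - int i + int k < 0)" using that False by (simp add: P_def)
      have natd: "nat (m - int i + int k) = P - i"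
      proof -
        have "nat (m - int i + int k) = nat ((m + int k) - int i)" by (simp add: algebra_simps)
        also have "\<dots> = nat (m + int k) - nat (int i)" using False by (intro nat_diff_distrib') auto
        finally show ?thesis by (simp add: P_def)
      qed
      show ?thesis
        unfolding iota2d_def if_not_P[OF cond]
        by (intro Sum_any.cong) (simp only: natd, simp add: e_def S_def algebra_simps)
    qed
    then show ?thesis by (simp add: fin)
  qed
  have outer0: "iota2d sc T H p r k (\<beta> - (int T * w - int s - int T * int i)) (m - int i) = 0"
    if "i > P" for i
    using that False by (simp add: iota2d_def P_def)
  have "Sum_any (\<lambda>i::nat. sc ((of_int w - of_nat s / of_nat T) gchoose i)
            (iota2d sc T H p r k (\<beta> - (int T * w - int s - int T * int i)) (m - int i)))
      = (\<Sum>i\<le>P. sc (c i) (iota2d sc T H p r k (\<beta> - (int T * w - int s - int T * int i)) (m - int i)))"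
    unfolding c_def by (rule SA_bound_nat[OF vs]) (use outer0 in simp)
  also have "\<dots> = (\<Sum>i\<le>P. sc (c i) (\<Sum>a\<in>{0..S}. sc (e a (P - i)) (H a (S - a))))"
    by (rule sum.cong) (simp_all add: inner)
  also have "\<dots> = (\<Sum>a\<in>{0..S}. sc (\<Sum>i\<le>P. c i * e a (P - i)) (H a (S - a)))"
    by (simp add: V.scale_sum_right V.scale_sum_left sum.swap[of _ "{..P}"])
  also have "\<dots> = (\<Sum>a\<in>{0..S}. sc ((of_int w - of_nat s / of_nat T
            + of_int (a - int p) / of_nat T) gchoose P) (H a (S - a)))"
    by (simp add: c_def e_def atMost_atLeast0 gbinomial_Vandermonde)
  also have "\<dots> = Sum_any (\<lambda>a. sc ((of_int w - of_nat s / of_nat T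
            + of_int (a - int p) / of_nat T) gchoose P) (H a (S - a)))"
    by (simp add: fin)
  finally show ?thesis using False by (simp add: P_def S_def)
qed

lemma EC:
  assumes H: "psupp H" and hom: "\<forall>a b. H a b \<noteq> 0 \<longrightarrow> a mod int T = int ((s + p) mod T)"
    and T: "T > 0"
  shows "deltaC sc T s (iota2d sc T H p r k) m \<alpha> \<beta>
    = (if (\<alpha> - int s) mod int T \<noteq> 0 then 0 else Sum_any (\<lambda>u::int. sc (wC (-m-1-int k) u)
        (H (\<alpha> + int p + int T*(int k + m + 1) + int T*u) (\<beta> + int r - int T*u))))"
proof (cases "(\<alpha> - int s) mod int T = 0")
  case False
  then show ?thesis by (simp add: deltaC_def)
next
  case z: True
  define d where "d = (\<alpha> - int s) div int T"
  have \<alpha>: "\<alpha> = int s + int T * d"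
    using z unfolding d_def by (metis add.commute diff_add_cancel div_mult_mod_eq mult.commute add_0)
  define a0 where "a0 = \<alpha> + int p + int T*(int k + m + 1)"
  have lhs: "deltaC sc T s (iota2d sc T H p r k) m \<alpha> \<beta>
     = Sum_any (\<lambda>i::nat. sc ((of_int (-d-1) - of_nat s / of_nat T) gchoose i)
            (iota2d sc T H p r k (\<beta> - (int T * (-d-1) - int s - int T * int i)) (m - int i)))"
    using z by (simp add: deltaC_def d_def)
  show ?thesis
  proof (cases "m + int k < 0")
    case True
    then show ?thesis using z unfolding lhs expandC[OF H] by (simp add: wC_def)
  next
    case False
    define S where "S = \<beta> - int T * (-d-1) + int s + int r + int p + int T * (m + int k)"
    have "deltaC sc T s (iota2d sc T H p r k) m \<alpha> \<beta> = Sum_any (\<lambda>a. sc ((of_int (-d-1) - of_nat s / of_nat T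
            + of_int (a - int p) / of_nat T) gchoose nat (m + int k)) (H a (S - a)))"
      unfolding lhs expandC[OF H] S_def using False by simp
    also have "\<dots> = Sum_any (\<lambda>u. sc ((of_int (-d-1) - of_nat s / of_nat T
            + of_int ((a0 + int T * u) - int p) / of_nat T) gchoose nat (m + int k))
            (H (a0 + int T * u) (S - (a0 + int T * u))))"
    proof (rule SA_reindex)
      show "inj (\<lambda>u. a0 + int T * u)" using T by (auto simp: inj_on_def)
      have "a0 = (int s + int p) + int T * (d + int k + m + 1)"
        unfolding a0_def \<alpha> by (simp add: algebra_simps)
      then have a0m: "a0 mod int T = int ((s + p) mod T)"
        by (simp only: mod_mult_self2 of_nat_mod of_nat_add)
      show "\<forall>x. sc ((of_int (-d-1) - of_nat s / of_nat T + of_int (x - int p) / of_nat T) gchoose nat (m + int k))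
             (H x (S - x)) \<noteq> 0 \<longrightarrow> x \<in> range (\<lambda>u. a0 + int T * u)"
      proof (intro allI impI)
        fix x assume "sc ((of_int (-d-1) - of_nat s / of_nat T + of_int (x - int p) / of_nat T) gchoose nat (m + int k))
             (H x (S - x)) \<noteq> 0"
        then have "H x (S - x) \<noteq> 0" by auto
        then have "x mod int T = a0 mod int T" using hom a0m by auto
        then have "x = a0 + int T * ((x - a0) div int T)"
          by (metis add.commute diff_add_cancel mod_eq_dvd_iff dvd_mult_div_cancel)
        then show "x \<in> range (\<lambda>u. a0 + int T * u)" by blast
      qed
    qed
    also have "\<dots> = Sum_any (\<lambda>u::int. sc (wC (-m-1-int k) u)
        (H (\<alpha> + int p + int T*(int k + m + 1) + int T*u) (\<beta> + int r - int T*u)))"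
    proof (rule Sum_any.cong)
      fix u
      have Tn: "(of_nat T :: complex) \<noteq> 0" using T by simp
      have e1: "(of_int ((a0 + int T * u) - int p) :: complex)
          = of_nat s + of_nat T * of_int (d + int k + m + 1 + u)"
        unfolding a0_def \<alpha> by (simp add: algebra_simps)
      have cf: "(of_int (-d-1) - of_nat s / of_nat T + of_int ((a0 + int T * u) - int p) / of_nat T :: complex)
           = of_int (u - (-m-1-int k) - 1)"
        unfolding e1 using Tn by (simp add: field_simps)
      have wc: "wC (-m-1-int k) u = of_int (u - (-m-1-int k) - 1) gchoose nat (m + int k)"
        using False by (simp add: wC_def add.commute)
      have S2: "S - (a0 + int T * u) = \<beta> + int r - int T*u"
        unfolding S_def a0_def \<alpha> by (simp add: algebra_simps)
      show "sc ((of_int (-d-1) - of_nat s / of_nat T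
            + of_int ((a0 + int T * u) - int p) / of_nat T) gchoose nat (m + int k))
            (H (a0 + int T * u) (S - (a0 + int T * u)))
          = sc (wC (-m-1-int k) u)
        (H (\<alpha> + int p + int T*(int k + m + 1) + int T*u) (\<beta> + int r - int T*u))"
        by (subst cf, subst S2) (simp add: wc a0_def)
    qed
    finally show ?thesis using z by simp
  qed
qed

lemma diag_fin:
  assumes H: "psupp H" and T: "T > 0"
  shows "\<forall>u. H (a0 + int T * u) (b0 - int T * u) \<noteq> 0 \<longrightarrow> u \<in> {-\<bar>a0\<bar>..\<bar>b0\<bar>}"
proof (intro allI impI)
  fix u assume "H (a0 + int T * u) (b0 - int T * u) \<noteq> 0"
  then have a: "0 \<le> a0 + int T * u" and b: "0 \<le> b0 - int T * u"
    using psupp_nz[OF H, of "a0 + int T * u" "b0 - int T * u"] by auto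
  have "-\<bar>a0\<bar> \<le> u"
  proof (rule ccontr)
    assume "\<not> -\<bar>a0\<bar> \<le> u"
    then have "u < 0" "u < -\<bar>a0\<bar>" by auto
    then have "int T * u \<le> u" using T Tmono2 by auto
    then show False using a \<open>u < -\<bar>a0\<bar>\<close> by linarith
  qed
  moreover have "u \<le> \<bar>b0\<bar>"
  proof (rule ccontr)
    assume "\<not> u \<le> \<bar>b0\<bar>"
    then have "u > 0" "u > \<bar>b0\<bar>" by auto
    then have "int T * u \<ge> u" using T Tmono1 by auto
    then show False using b \<open>u > \<bar>b0\<bar>\<close> by linarith
  qed
  ultimately show "u \<in> {-\<bar>a0\<bar>..\<bar>b0\<bar>}" by simp
qed

lemma DI:
  assumes H: "psupp H" and hom: "\<forall>a b. H a b \<noteq> 0 \<longrightarrow> a mod int T = int ((s + p) mod T)"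
    and T: "T > 0"
  shows "deltaA sc T (iota12 sc T H p r k) m \<alpha> \<beta> - deltaB sc T (iota21 sc T H p r k) m \<alpha> \<beta>
       = deltaC sc T s (iota2d sc T H p r k) m \<alpha> \<beta>"
proof -
  define a0 where "a0 = \<alpha> + int p + int T*(int k + m + 1)"
  define b0 where "b0 = \<beta> + int r"
  have e12: "deltaA sc T (iota12 sc T H p r k) m \<alpha> \<beta>
     = Sum_any (\<lambda>u. sc (w12 (-m-1-int k) u) (H (a0 + int T*u) (b0 - int T*u)))"
    unfolding E12[OF vs H T] a0_def b0_def ..
  have e21: "deltaB sc T (iota21 sc T H p r k) m \<alpha> \<beta>
     = Sum_any (\<lambda>u. sc (w21 (-m-1-int k) u) (H (a0 + int T*u) (b0 - int T*u)))"
    unfolding E21[OF vs H T] a0_def b0_def ..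
  have ec: "deltaC sc T s (iota2d sc T H p r k) m \<alpha> \<beta>
     = (if (\<alpha> - int s) mod int T \<noteq> 0 then 0 else
        Sum_any (\<lambda>u. sc (wC (-m-1-int k) u) (H (a0 + int T*u) (b0 - int T*u))))"
    unfolding EC[OF H hom T] a0_def b0_def ..
  show ?thesis
  proof (cases "(\<alpha> - int s) mod int T = 0")
    case False
    have gz: "H (a0 + int T * u) b = 0" for u b
    proof (rule ccontr)
      assume "H (a0 + int T * u) b \<noteq> 0"
      then have "(a0 + int T * u) mod int T = int ((s + p) mod T)"
        using hom by blast
      then have h1: "a0 mod int T = (int s + int p) mod int T" by (simp add: of_nat_mod)
      have "a0 = (\<alpha> + int p) + int T * (int k + m + 1)"
        unfolding a0_def by (simp add: algebra_simps)
      then have "(\<alpha> + int p) mod int T = (int s + int p) mod int T"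
        using h1 by (metis mod_mult_self2)
      then have "int T dvd (\<alpha> + int p) - (int s + int p)" by (simp add: mod_eq_dvd_iff)
      then have "int T dvd \<alpha> - int s" by simp
      then show False using False by simp
    qed
    show ?thesis using False by (simp add: e12 e21 ec gz)
  next
    case True
    have "deltaA sc T (iota12 sc T H p r k) m \<alpha> \<beta> - deltaB sc T (iota21 sc T H p r k) m \<alpha> \<beta>
       = Sum_any (\<lambda>u. sc (w12 (-m-1-int k) u - w21 (-m-1-int k) u) (H (a0 + int T*u) (b0 - int T*u)))"
      unfolding e12 e21 by (rule SA_diff[OF vs _ diag_fin[OF H T]]) simp
    also have "\<dots> = deltaC sc T s (iota2d sc T H p r k) m \<alpha> \<beta>"
      unfolding ec using True by (simp add: pw_identity)
    finally show ?thesis .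
  qed
qed

end

lemma sum_reflect: "(\<Sum>i\<le>l. f i) = (\<Sum>i\<le>(l::nat). f (l - i))"
  by (rule sum.reindex_bij_witness[where i="\<lambda>i. l - i" and j="\<lambda>i. l - i"]) auto

lemma modlem:
  assumes "0 < T" "s < T"
  shows "((x + int p + int T * y) mod int T = int ((s + p) mod T)) \<longleftrightarrow> (x mod int T = int s)"
proof -
  have "((x + int p + int T * y) mod int T = int ((s + p) mod T))
      \<longleftrightarrow> ((x + int p) mod int T = (int s + int p) mod int T)"
    by (simp add: of_nat_mod mod_mult_self2 add.assoc[symmetric])
  also have "\<dots> \<longleftrightarrow> int T dvd (x - int s)" by (simp add: mod_eq_dvd_iff)
  also have "\<dots> \<longleftrightarrow> x mod int T = int s mod int T" by (simp add: mod_eq_dvd_iff)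
  also have "int s mod int T = int s" using assms by simp
  finally show ?thesis .
qed

lemma mod_shift: "(a + int T * y) mod int T = a mod int T"
  by (simp add: mod_mult_self2)

lemma proj_hom: "\<forall>a b. proj1 T t G a b \<noteq> 0 \<longrightarrow> a mod int T = int t"
  by (simp add: proj1_def)

lemma proj_psupp: "psupp G \<Longrightarrow> psupp (proj1 T t G)"
  by (simp add: psupp_def proj1_def)

context
  fixes sc :: "complex \<Rightarrow> 'm::ab_group_add \<Rightarrow> 'm"
  assumes vs: "vector_space sc"
begin

interpretation V: vector_space sc by (rule vs)

lemma proj1_iota12:
  assumes T: "0 < T" and s: "s < T"
  shows "proj1 T s (iota12 sc T G p r k) = iota12 sc T (proj1 T ((s + p) mod T) G) p r k"
proof (intro ext)
  fix \<alpha> \<beta>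
  have c: "((\<alpha> + int p + int T * (int k + int i)) mod int T = int ((s + p) mod T)) \<longleftrightarrow> (\<alpha> mod int T = int s)" for i
    using modlem[OF T s] by blast
  show "proj1 T s (iota12 sc T G p r k) \<alpha> \<beta> = iota12 sc T (proj1 T ((s + p) mod T) G) p r k \<alpha> \<beta>"
    unfolding proj1_def iota12_def c by simp
qed

lemma proj1_iota21:
  assumes T: "0 < T" and s: "s < T"
  shows "proj1 T s (iota21 sc T G p r k) = iota21 sc T (proj1 T ((s + p) mod T) G) p r k"
proof (intro ext)
  fix \<alpha> \<beta>
  have c: "((\<alpha> + int p - int T * int i) mod int T = int ((s + p) mod T)) \<longleftrightarrow> (\<alpha> mod int T = int s)" for i
    using modlem[OF T s, where x=\<alpha> and y="- int i"] by simp
  show "proj1 T s (iota21 sc T G p r k) \<alpha> \<beta> = iota21 sc T (proj1 T ((s + p) mod T) G) p r k \<alpha> \<beta>"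
    unfolding proj1_def iota21_def c by simp
qed

lemma deltaA_polymul:
  "deltaA sc T X (- int l - 1) \<alpha> \<beta> = polymul sc T X 0 0 l \<alpha> \<beta>"
proof -
  have "deltaA sc T X (- int l - 1) \<alpha> \<beta> = Sum_any (\<lambda>i. sc ((-1)^i * of_nat (l choose i))
           (X (\<alpha> - int T * (int l - int i)) (\<beta> - int T * int i)))"
    unfolding deltaA_def Let_def by (simp add: binomial_gbinomial)
  also have "\<dots> = (\<Sum>i\<le>l. sc ((-1)^i * of_nat (l choose i))
           (X (\<alpha> - int T * (int l - int i)) (\<beta> - int T * int i)))"
    by (rule SA_bound_nat[OF vs]) simp
  finally show ?thesis by (simp add: polymul_def)
qed

lemma deltaB_polymul:
  "deltaB sc T Y (- int l - 1) \<alpha> \<beta> = polymul sc T Y 0 0 l \<alpha> \<beta>"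
proof -
  have "deltaB sc T Y (- int l - 1) \<alpha> \<beta> = Sum_any (\<lambda>i. sc ((-1) powi (int l - int i) * of_nat (l choose i))
           (Y (\<alpha> - int T * int i) (\<beta> - int T * (int l - int i))))"
    unfolding deltaB_def Let_def by (simp add: binomial_gbinomial)
  also have "\<dots> = (\<Sum>i\<le>l. sc ((-1) powi (int l - int i) * of_nat (l choose i))
           (Y (\<alpha> - int T * int i) (\<beta> - int T * (int l - int i))))"
    by (rule SA_bound_nat[OF vs]) simp
  also have "\<dots> = (\<Sum>i\<le>l. sc ((-1) powi (int l - int (l - i)) * of_nat (l choose (l - i)))
           (Y (\<alpha> - int T * int (l - i)) (\<beta> - int T * (int l - int (l - i)))))"
    by (rule sum_reflect)
  also have "\<dots> = (\<Sum>i\<le>l. sc ((-1)^i * of_nat (l choose i))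
           (Y (\<alpha> - int 0 - int T * (int l - int i)) (\<beta> - int 0 - int T * int i)))"
  proof (rule sum.cong)
    fix i assume "i \<in> {..l}"
    then have il: "i \<le> l" by simp
    then have "int l - int (l - i) = int i" by simp
    moreover have "l choose (l - i) = l choose i" using il by (simp add: binomial_symmetric[symmetric])
    ultimately show "sc ((-1) powi (int l - int (l - i)) * of_nat (l choose (l - i)))
           (Y (\<alpha> - int T * int (l - i)) (\<beta> - int T * (int l - int (l - i))))
        = sc ((-1)^i * of_nat (l choose i))
           (Y (\<alpha> - int 0 - int T * (int l - int i)) (\<beta> - int 0 - int T * int i))"
      using il by (simp add: of_nat_diff)
  qed simp
  finally show ?thesis by (simp add: polymul_def)
qed

lemma polymul_proj:
  "polymul sc T (proj1 T s X) 0 0 l = proj1 T s (polymul sc T X 0 0 l)"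
proof (intro ext)
  fix a b
  have c: "((a - int T * (int l - int i)) mod int T = int s) = (a mod int T = int s)" for i
  proof -
    have "a - int T * (int l - int i) = a + int T * (int i - int l)" by (simp add: algebra_simps)
    then show ?thesis by (simp only: mod_shift)
  qed
  show "polymul sc T (proj1 T s X) 0 0 l a b = proj1 T s (polymul sc T X 0 0 l) a b"
    unfolding polymul_def proj1_def by (simp add: c)
qed

lemma loc_F:
  assumes G: "psupp G" and T: "T > 0" and kl: "k \<le> l"
  shows "polymul sc T (iota12 sc T G p r k) 0 0 l = polymul sc T (iota21 sc T G p r k) 0 0 l"
proof (intro ext)
  fix a b
  have w: "w12 (- (- int l - 1) - 1 - int k) u = w21 (- (- int l - 1) - 1 - int k) u" for u
    using pw_identity[of "- (- int l - 1) - 1 - int k" u] kl by (simp add: wC_def)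
  show "polymul sc T (iota12 sc T G p r k) 0 0 l a b = polymul sc T (iota21 sc T G p r k) 0 0 l a b"
    unfolding deltaA_polymul[where X="iota12 sc T G p r k", symmetric]
      deltaB_polymul[where Y="iota21 sc T G p r k", symmetric] E12[OF vs G T] E21[OF vs G T] w ..
qed

lemma sum_proj: "0 < T \<Longrightarrow> (\<Sum>s<T. proj1 T ((s + p) mod T) G a b) = G a b"
proof -
  assume T: "0 < T"
  define s0 where "s0 = nat ((a - int p) mod int T)"
  have s0T: "s0 < T" using T unfolding s0_def by (simp add: nat_less_iff)
  have "(a mod int T = int ((s + p) mod T)) \<longleftrightarrow> s = s0" if "s < T" for s
  proof -
    have "(a mod int T = int ((s + p) mod T)) \<longleftrightarrow> ((a - int p) mod int T = int s)"
      using modlem[OF T that, where x="a - int p" and y=0 and p=p] by simp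
    also have "\<dots> \<longleftrightarrow> s = s0" unfolding s0_def using T by auto
    finally show ?thesis .
  qed
  then have "(\<Sum>s<T. proj1 T ((s + p) mod T) G a b) = (\<Sum>s<T. if s = s0 then G a b else 0)"
    by (intro sum.cong) (auto simp: proj1_def)
  also have "\<dots> = G a b" using s0T by simp
  finally show ?thesis .
qed

end

context
  fixes sc :: "complex \<Rightarrow> 'm::ab_group_add \<Rightarrow> 'm"
  assumes vs: "vector_space sc"
begin

interpretation V: vector_space sc by (rule vs)

lemma polymul_SA:
  "polymul sc T X p r k a b = Sum_any (\<lambda>i. sc ((-1)^i * of_nat (k choose i))
      (X (a - int p - int T * (int k - int i)) (b - int r - int T * int i)))"
  unfolding polymul_def by (rule SA_bound_nat[OF vs, symmetric]) simp

lemma polymul_SA_rev: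
  "polymul sc T X 0 0 l a b = Sum_any (\<lambda>v. sc ((-1)^l * (-1)^v * of_nat (l choose v))
      (X (a - int T * int v) (b - int T * (int l - int v))))"
proof -
  have "polymul sc T X 0 0 l a b = (\<Sum>i\<le>l. sc ((-1)^i * of_nat (l choose i))
      (X (a - int T * (int l - int i)) (b - int T * int i)))"
    by (simp add: polymul_def)
  also have "\<dots> = (\<Sum>i\<le>l. sc ((-1)^(l-i) * of_nat (l choose (l-i)))
      (X (a - int T * (int l - int (l-i))) (b - int T * int (l-i))))"
    by (rule sum_reflect)
  also have "\<dots> = (\<Sum>v\<le>l. sc ((-1)^l * (-1)^v * of_nat (l choose v))
      (X (a - int T * int v) (b - int T * (int l - int v))))"
  proof (rule sum.cong)
    fix v assume "v \<in> {..l}"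
    then have vl: "v \<le> l" by simp
    have s: "(-1::complex)^(l-v) = (-1)^l * (-1)^v"
    proof -
      have "(-1::complex)^l = (-1)^(l-v) * (-1)^v" using vl by (simp flip: power_add)
      then have "(-1::complex)^l * (-1)^v = (-1)^(l-v) * ((-1)^v * (-1)^v)" by (simp add: mult.assoc)
      also have "(-1::complex)^v * (-1)^v = 1" by (simp flip: power_add)
      finally show ?thesis by simp
    qed
    show "sc ((-1)^(l-v) * of_nat (l choose (l-v)))
      (X (a - int T * (int l - int (l-v))) (b - int T * int (l-v)))
      = sc ((-1)^l * (-1)^v * of_nat (l choose v))
      (X (a - int T * int v) (b - int T * (int l - int v)))"
      using vl by (simp add: s binomial_symmetric[symmetric] of_nat_diff)
  qed simp
  also have "\<dots> = Sum_any (\<lambda>v. sc ((-1)^l * (-1)^v * of_nat (l choose v))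
      (X (a - int T * int v) (b - int T * (int l - int v))))"
    by (rule SA_bound_nat[OF vs, symmetric]) simp
  finally show ?thesis .
qed

lemma sum_delta0: "(\<Sum>u\<le>K. sc (if u = 0 then 1 else 0) (Z u)) = Z (0::nat)"
  by (simp add: if_distrib[of "\<lambda>c. sc c _"] cong: if_cong)

lemma polymul_iota12:
  assumes G: "psupp G" and T: "T > 0"
  shows "polymul sc T (iota12 sc T G p r k) p r k = G"
proof (intro ext)
  fix a b
  define Z where "Z u = G (a + int T * int u) (b - int T * int u)" for u :: nat
  define K where "K = nat b"
  have ZK: "\<forall>u>K. Z u = 0"
  proof (intro allI impI)
    fix u assume "u > K"
    then have "int u > b" unfolding K_def by linarith
    moreover have "int T * int u \<ge> int u" using T by (simp add: Tmono1)
    ultimately show "Z u = 0" using G unfolding Z_def psupp_def by auto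
  qed
  have "polymul sc T (iota12 sc T G p r k) p r k a b
      = Sum_any (\<lambda>i. sc ((-1)^i * of_nat (k choose i))
          (Sum_any (\<lambda>j. sc ((-1)^j * ((- of_nat k) gchoose j)) (Z (i+j)))))"
    unfolding polymul_SA iota12_def Z_def by (simp add: algebra_simps)
  also have "\<dots> = (\<Sum>u\<le>K. sc (\<Sum>i\<le>u. ((-1)^i * of_nat (k choose i)) *
          ((-1)^(u-i) * ((- of_nat k) gchoose (u-i)))) (Z u))"
    by (rule master[OF vs ZK])
  also have "\<dots> = Z 0" by (simp only: conv_inv1 sum_delta0)
  finally show "polymul sc T (iota12 sc T G p r k) p r k a b = G a b" by (simp add: Z_def)
qed

lemma polymul_comm:
  "polymul sc T (polymul sc T X p r k) p' r' k' = polymul sc T (polymul sc T X p' r' k') p r k"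
proof (intro ext)
  fix a b
  show "polymul sc T (polymul sc T X p r k) p' r' k' a b = polymul sc T (polymul sc T X p' r' k') p r k a b"
    unfolding polymul_def V.scale_sum_right V.scale_scale
    by (subst sum.swap) (simp add: algebra_simps)
qed

lemma loc_to_G:
  assumes T: "T > 0" and lA: "laurent2 A" and lB: "laurent2 (\<lambda>b a. B a b)"
    and eq: "polymul sc T A 0 0 l = polymul sc T B 0 0 l"
  shows "\<exists>G p r. psupp G \<and> iota12 sc T G p r l = A \<and> iota21 sc T G p r l = B"
proof -
  obtain NA where NA: "\<forall>i j. j < NA \<longrightarrow> A i j = 0" using lA unfolding laurent2_def by blast
  obtain NB where NB: "\<forall>i j. j < NB \<longrightarrow> B j i = 0" using lB unfolding laurent2_def by blast
  define P where "P = polymul sc T A 0 0 l"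
  define p where "p = nat (- NB)"
  define r where "r = nat (- NA)"
  define G where "G a b = P (a - int p) (b - int r)" for a b
  have PA: "P a b = 0" if "b < NA" for a b
  proof -
    have "b - int T * int i < NA" for i
    proof -
      have "0 \<le> int T * int i" by simp
      then show ?thesis using that by linarith
    qed
    then show ?thesis unfolding P_def polymul_def using NA by simp
  qed
  have PB: "P a b = 0" if "a < NB" for a b
  proof -
    have "a - int T * (int l - int i) < NB" if "i \<le> l" for i
    proof -
      have "0 \<le> int T * (int l - int i)" using that by simp
      then show ?thesis using \<open>a < NB\<close> by linarith
    qed
    then show ?thesis unfolding P_def eq unfolding polymul_def using NB by simp
  qed
  have Gs: "psupp G"
    unfolding psupp_def G_def p_def r_def using PA PB by force
  have i12: "iota12 sc T G p r l = A"
  proof (intro ext)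
    fix \<alpha> \<beta>
    define Z where "Z u = A (\<alpha> + int T * int u) (\<beta> - int T * int u)" for u :: nat
    define K where "K = nat (\<beta> - NA)"
    have ZK: "\<forall>u>K. Z u = 0"
    proof (intro allI impI)
      fix u assume "u > K"
      then have "int u > \<beta> - NA" unfolding K_def by linarith
      moreover have "int T * int u \<ge> int u" using T by (simp add: Tmono1)
      ultimately show "Z u = 0" using NA unfolding Z_def by auto
    qed
    have "iota12 sc T G p r l \<alpha> \<beta>
        = Sum_any (\<lambda>i. sc ((-1)^i * ((- of_nat l) gchoose i))
            (Sum_any (\<lambda>j. sc ((-1)^j * of_nat (l choose j)) (Z (i+j)))))"
      unfolding iota12_def G_def P_def polymul_SA Z_def by (simp add: algebra_simps)
    also have "\<dots> = (\<Sum>u\<le>K. sc (\<Sum>i\<le>u. ((-1)^i * ((- of_nat l) gchoose i)) *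
          ((-1)^(u-i) * of_nat (l choose (u-i)))) (Z u))"
      by (rule master[OF vs ZK])
    also have "\<dots> = Z 0" by (simp only: conv_inv2 sum_delta0)
    finally show "iota12 sc T G p r l \<alpha> \<beta> = A \<alpha> \<beta>" by (simp add: Z_def)
  qed
  have i21: "iota21 sc T G p r l = B"
  proof (intro ext)
    fix \<alpha> \<beta>
    define Z where "Z u = B (\<alpha> - int T * int u) (\<beta> + int T * int u)" for u :: nat
    define K where "K = nat (\<alpha> - NB)"
    have ZK: "\<forall>u>K. Z u = 0"
    proof (intro allI impI)
      fix u assume "u > K"
      then have "int u > \<alpha> - NB" unfolding K_def by linarith
      moreover have "int T * int u \<ge> int u" using T by (simp add: Tmono1)
      ultimately show "Z u = 0" using NB unfolding Z_def by auto
    qed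
    have "iota21 sc T G p r l \<alpha> \<beta>
        = Sum_any (\<lambda>i. sc ((-1)^(l+i) * ((- of_nat l) gchoose i))
            (Sum_any (\<lambda>j. sc ((-1)^l * (-1)^j * of_nat (l choose j)) (Z (i+j)))))"
      unfolding iota21_def G_def P_def eq unfolding polymul_SA_rev Z_def by (simp add: algebra_simps)
    also have "\<dots> = (\<Sum>u\<le>K. sc (\<Sum>i\<le>u. ((-1)^(l+i) * ((- of_nat l) gchoose i)) *
          ((-1)^l * (-1)^(u-i) * of_nat (l choose (u-i)))) (Z u))"
      by (rule master[OF vs ZK])
    also have "\<dots> = Z 0" by (simp only: conv_inv3 sum_delta0)
    finally show "iota21 sc T G p r l \<alpha> \<beta> = B \<alpha> \<beta>" by (simp add: Z_def)
  qed
  show ?thesis using Gs i12 i21 by blast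
qed

end

context
  fixes sc :: "complex \<Rightarrow> 'm::ab_group_add \<Rightarrow> 'm"
  assumes vs: "vector_space sc"
begin

interpretation V: vector_space sc by (rule vs)

lemma sub_id:
  assumes H: "psupp H" and hom: "\<forall>a b. H a b \<noteq> 0 \<longrightarrow> a mod int T = int ((s + p) mod T)"
    and T: "T > 0" and s: "s < T" and q: "p + 1 \<le> q"
  shows "substA sc T s q (iota12 sc T H p r k) = expC sc T s q (iota2d sc T H p r k)"
proof (intro ext)
  fix m \<gamma>
  define M where "M = m + int k"
  define a0 where "a0 = int s + int p + int T * (M - int q)"
  define b0 where "b0 = \<gamma> + int r"
  define Z where "Z u = H (a0 + int T * int u) (b0 - int T * int u)" for u :: nat
  define K where "K = nat (\<gamma> + int r)"
  have ZK: "\<forall>u>K. Z u = 0"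
  proof (intro allI impI)
    fix u assume "u > K"
    then have "int u > \<gamma> + int r" unfolding K_def by linarith
    moreover have "int T * int u \<ge> int u" using T by (simp add: Tmono1)
    ultimately show "Z u = 0" using H unfolding Z_def b0_def psupp_def by auto
  qed
  define wL where "wL u = (if 0 \<le> u then (of_int (M + u) :: complex) gchoose nat u else 0)" for u
  define wR where "wR u = (if M < 0 then 0 else (of_int (M + u) :: complex) gchoose nat M)" for u
  have lhs: "substA sc T s q (iota12 sc T H p r k) m \<gamma>
      = Sum_any (\<lambda>u::int. sc (wL u) (H (a0 + int T * u) (b0 - int T * u)))"
  proof -
    have "substA sc T s q (iota12 sc T H p r k) m \<gamma>
      = Sum_any (\<lambda>j. sc (of_int (m + int j) gchoose j)
          (Sum_any (\<lambda>i. sc ((-1)^i * ((- of_nat k) gchoose i)) (Z (j+i)))))"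
      unfolding substA_def iota12_def Z_def a0_def b0_def M_def by (simp add: algebra_simps)
    also have "\<dots> = (\<Sum>u\<le>K. sc (\<Sum>j\<le>u. (of_int (m + int j) gchoose j) *
          ((-1)^(u-j) * ((- of_nat k) gchoose (u-j)))) (Z u))"
      by (rule master[OF vs ZK])
    also have "\<dots> = (\<Sum>u\<le>K. sc (of_int (m + int k + int u) gchoose u) (Z u))"
      by (simp only: conv_sub)
    also have "\<dots> = Sum_any (\<lambda>u. sc (of_int (m + int k + int u) gchoose u) (Z u))"
      by (rule SA_bound_nat[OF vs, symmetric]) (use ZK in simp)
    also have "\<dots> = Sum_any (\<lambda>u::int. sc (wL u) (H (a0 + int T * u) (b0 - int T * u)))"
      by (subst SA_nat_to_int[OF vs]) (simp_all add: wL_def Z_def M_def)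
    finally show ?thesis .
  qed
  have rhs: "expC sc T s q (iota2d sc T H p r k) m \<gamma>
      = Sum_any (\<lambda>u::int. sc (wR u) (H (a0 + int T * u) (b0 - int T * u)))"
  proof (cases "M < 0")
    case True
    have "expC sc T s q (iota2d sc T H p r k) m \<gamma>
      = Sum_any (\<lambda>i::nat. sc ((of_int (int q) - of_nat s / of_nat T) gchoose i)
            (iota2d sc T H p r k (\<gamma> - (int T * int q - int s - int T * int i)) (m - int i)))"
      unfolding expC_def by simp
    also have "\<dots> = 0" unfolding expandC[OF vs H] using True by (simp add: M_def)
    finally show ?thesis using True by (simp add: wR_def)
  next
    case False
    define S where "S = \<gamma> - int T * int q + int s + int r + int p + int T * M"
    have "expC sc T s q (iota2d sc T H p r k) m \<gamma>
      = Sum_any (\<lambda>i::nat. sc ((of_int (int q) - of_nat s / of_nat T) gchoose i)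
            (iota2d sc T H p r k (\<gamma> - (int T * int q - int s - int T * int i)) (m - int i)))"
      unfolding expC_def by simp
    also have "\<dots> = Sum_any (\<lambda>a. sc ((of_int (int q) - of_nat s / of_nat T
            + of_int (a - int p) / of_nat T) gchoose nat M) (H a (S - a)))"
      unfolding expandC[OF vs H] using False by (simp add: M_def S_def)
    also have "\<dots> = Sum_any (\<lambda>u. sc ((of_int (int q) - of_nat s / of_nat T
            + of_int ((a0 + int T * u) - int p) / of_nat T) gchoose nat M)
            (H (a0 + int T * u) (S - (a0 + int T * u))))"
    proof (rule SA_reindex)
      show "inj (\<lambda>u. a0 + int T * u)" using T by (auto simp: inj_on_def)
      have "a0 = (int s + int p) + int T * (M - int q)" by (simp add: a0_def)
      then have a0m: "a0 mod int T = int ((s + p) mod T)"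
        by (simp only: mod_mult_self2 of_nat_mod of_nat_add)
      show "\<forall>x. sc ((of_int (int q) - of_nat s / of_nat T + of_int (x - int p) / of_nat T) gchoose nat M)
             (H x (S - x)) \<noteq> 0 \<longrightarrow> x \<in> range (\<lambda>u. a0 + int T * u)"
      proof (intro allI impI)
        fix x assume "sc ((of_int (int q) - of_nat s / of_nat T + of_int (x - int p) / of_nat T) gchoose nat M)
             (H x (S - x)) \<noteq> 0"
        then have "H x (S - x) \<noteq> 0" by auto
        then have "x mod int T = a0 mod int T" using hom a0m by auto
        then have "x = a0 + int T * ((x - a0) div int T)"
          by (metis add.commute diff_add_cancel mod_eq_dvd_iff dvd_mult_div_cancel)
        then show "x \<in> range (\<lambda>u. a0 + int T * u)" by blast
      qed
    qed
    also have "\<dots> = Sum_any (\<lambda>u::int. sc (wR u) (H (a0 + int T * u) (b0 - int T * u)))"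
    proof (rule Sum_any.cong)
      fix u
      have Tn: "(of_nat T :: complex) \<noteq> 0" using T by simp
      have e1: "(of_int ((a0 + int T * u) - int p) :: complex)
          = of_nat s + of_nat T * of_int (M - int q + u)"
        unfolding a0_def by (simp add: algebra_simps)
      have cf: "(of_int (int q) - of_nat s / of_nat T + of_int ((a0 + int T * u) - int p) / of_nat T :: complex)
           = of_int (M + u)"
        unfolding e1 using Tn by (simp add: field_simps)
      have S2: "S - (a0 + int T * u) = b0 - int T*u"
        unfolding S_def a0_def b0_def by (simp add: algebra_simps)
      show "sc ((of_int (int q) - of_nat s / of_nat T
            + of_int ((a0 + int T * u) - int p) / of_nat T) gchoose nat M)
            (H (a0 + int T * u) (S - (a0 + int T * u)))
          = sc (wR u) (H (a0 + int T * u) (b0 - int T * u))"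
        by (subst cf, subst S2) (simp add: wR_def False)
    qed
    finally show ?thesis .
  qed
  have pw: "sc (wL u) (H (a0 + int T * u) (b0 - int T * u)) = sc (wR u) (H (a0 + int T * u) (b0 - int T * u))" for u
  proof (cases "H (a0 + int T * u) (b0 - int T * u) = 0")
    case True then show ?thesis by simp
  next
    case False
    then have nn: "0 \<le> a0 + int T * u" using psupp_nz[OF H] by blast
    have t1: "int T * q \<ge> int T * (int p + 1)" using q by (simp add: mult_left_mono)
    have t2: "int T * int p \<ge> int p" using T by (simp add: Tmono1)
    have t3: "int s + 1 \<le> int T" using s by simp
    have "a0 + int T * u = int s + int p + int T * (M + u) - int T * q"
      unfolding a0_def by (simp add: algebra_simps)
    then have "int T * (M + u) > 0" using nn t1 t2 t3 by (simp add: algebra_simps)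
    then have t: "M + u > 0" using T by (simp add: zero_less_mult_iff)
    have g: "(of_int (M + u) :: complex) gchoose j = of_nat (nat (M+u) choose j)" for j
      using t by (intro gch_int_nonneg) simp
    have "wL u = wR u"
    proof -
      consider "0 \<le> u" "0 \<le> M" | "0 \<le> u" "M < 0" | "u < 0" "0 \<le> M" | "u < 0" "M < 0" by linarith
      then show ?thesis
      proof cases
        case 1
        have "nat u + nat M = nat (M + u)" using 1 by simp
        then have "nat (M + u) choose nat u = nat (M + u) choose nat M" by (rule choose_sym)
        then show ?thesis using 1 t unfolding wL_def wR_def g by simp
      next
        case 2
        have "nat (M + u) < nat u" using 2 t by simp
        then show ?thesis using 2 t unfolding wL_def wR_def g by (simp add: binomial_eq_0)
      next
        case 3
        have "nat (M + u) < nat M" using 3 t by simp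
        then show ?thesis using 3 t unfolding wL_def wR_def g by (simp add: binomial_eq_0)
      next
        case 4 then show ?thesis using t by simp
      qed
    qed
    then show ?thesis by simp
  qed
  show "substA sc T s q (iota12 sc T H p r k) m \<gamma> = expC sc T s q (iota2d sc T H p r k) m \<gamma>"
    unfolding lhs rhs by (rule Sum_any.cong) (rule pw)
qed

end

context
  fixes sc :: "complex \<Rightarrow> 'm::ab_group_add \<Rightarrow> 'm"
  assumes vs: "vector_space sc"
begin

interpretation V: vector_space sc by (rule vs)

lemma SHIFT:
  fixes W :: "nat \<Rightarrow> 'm"
  assumes W: "\<forall>j>K. W j = 0"
    and c: "\<forall>j. cL j = c1 j + (case j of 0 \<Rightarrow> 0 | Suc j' \<Rightarrow> c2 j')"
  shows "Sum_any (\<lambda>j. sc (cL j) (W j)) = Sum_any (\<lambda>j. sc (c1 j) (W j)) + Sum_any (\<lambda>j. sc (c2 j) (W (Suc j)))"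
proof -
  define g where "g j = sc (case j of 0 \<Rightarrow> 0 | Suc j' \<Rightarrow> c2 j') (W j)" for j
  have e1: "Sum_any (\<lambda>j. sc (cL j) (W j)) = (\<Sum>j\<le>Suc K. sc (cL j) (W j))"
    by (rule SA_bound_nat[OF vs]) (use W in simp)
  have e2: "Sum_any (\<lambda>j. sc (c1 j) (W j)) = (\<Sum>j\<le>Suc K. sc (c1 j) (W j))"
    by (rule SA_bound_nat[OF vs]) (use W in simp)
  have e3: "Sum_any (\<lambda>j. sc (c2 j) (W (Suc j))) = (\<Sum>j\<le>K. sc (c2 j) (W (Suc j)))"
    by (rule SA_bound_nat[OF vs]) (use W in simp)
  have "(\<Sum>j\<le>Suc K. sc (cL j) (W j)) = (\<Sum>j\<le>Suc K. sc (c1 j) (W j)) + (\<Sum>j\<le>Suc K. g j)"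
    unfolding g_def using c by (simp add: V.scale_left_distrib sum.distrib)
  also have "(\<Sum>j\<le>Suc K. g j) = g 0 + (\<Sum>j\<le>K. g (Suc j))"
    by (rule sum.atMost_Suc_shift)
  also have "\<dots> = (\<Sum>j\<le>K. sc (c2 j) (W (Suc j)))" by (simp add: g_def)
  finally show ?thesis using e1 e2 e3 by simp
qed

lemma substA_Suc:
  assumes lX: "\<forall>i j. j < N \<longrightarrow> X i j = 0" and T: "T > 0"
  shows "substA sc T s (Suc q) X m \<gamma> = substA sc T s q X (m - 1) \<gamma> + substA sc T s q X m (\<gamma> - int T)"
proof -
  define W where "W j = X (int T * (m + int j - int (Suc q)) + int s) (\<gamma> - int T * int j)" for j
  have WK: "\<forall>j>nat (\<gamma> - N). W j = 0"
  proof (intro allI impI)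
    fix j assume "j > nat (\<gamma> - N)"
    then have "int j > \<gamma> - N" by linarith
    moreover have "int T * int j \<ge> int j" using T by (simp add: Tmono1)
    ultimately show "W j = 0" using lX unfolding W_def by auto
  qed
  have c: "\<forall>j. (of_int (m + int j) gchoose j :: complex) = (of_int (m - 1 + int j) gchoose j)
      + (case j of 0 \<Rightarrow> 0 | Suc j' \<Rightarrow> of_int (m + int j') gchoose j')"
  proof
    fix j show "(of_int (m + int j) gchoose j :: complex) = (of_int (m - 1 + int j) gchoose j)
      + (case j of 0 \<Rightarrow> 0 | Suc j' \<Rightarrow> of_int (m + int j') gchoose j')"
    proof (cases j)
      case (Suc j')
      have "(of_int (m + int j) gchoose j :: complex) = (of_int (m + int j') + 1) gchoose Suc j'"
        by (simp add: Suc algebra_simps)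
      also have "\<dots> = (of_int (m + int j') gchoose j') + (of_int (m + int j') gchoose Suc j')"
        by (rule gbinomial_Suc_Suc)
      also have "(of_int (m + int j') gchoose Suc j') = (of_int (m - 1 + int j) gchoose j :: complex)"
        by (simp add: Suc algebra_simps)
      finally have X: "(of_int (m + int j) gchoose j :: complex)
          = (of_int (m + int j') gchoose j') + (of_int (m - 1 + int j) gchoose j)" .
      show ?thesis unfolding X using Suc by simp
    qed simp
  qed
  have "substA sc T s (Suc q) X m \<gamma> = Sum_any (\<lambda>j. sc (of_int (m + int j) gchoose j) (W j))"
    unfolding substA_def W_def ..
  also have "\<dots> = Sum_any (\<lambda>j. sc (of_int (m - 1 + int j) gchoose j) (W j))
        + Sum_any (\<lambda>j. sc (of_int (m + int j) gchoose j) (W (Suc j)))"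
    by (rule SHIFT[OF WK c])
  also have "Sum_any (\<lambda>j. sc (of_int (m - 1 + int j) gchoose j) (W j)) = substA sc T s q X (m - 1) \<gamma>"
    unfolding substA_def W_def by (intro Sum_any.cong) (simp add: algebra_simps)
  also have "Sum_any (\<lambda>j. sc (of_int (m + int j) gchoose j) (W (Suc j))) = substA sc T s q X m (\<gamma> - int T)"
    unfolding substA_def W_def by (intro Sum_any.cong) (simp add: algebra_simps)
  finally show ?thesis .
qed

lemma expC_Suc:
  assumes lC: "\<forall>i j. j < N \<longrightarrow> C i j = 0"
  shows "expC sc T s (Suc q) C m \<gamma> = expC sc T s q C m (\<gamma> - int T) + expC sc T s q C (m - 1) \<gamma>"
proof -
  define W where "W j = C (\<gamma> - (int T * int (Suc q) - int s - int T * int j)) (m - int j)" for j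
  have WK: "\<forall>j>nat (m - N). W j = 0"
  proof (intro allI impI)
    fix j assume "j > nat (m - N)"
    then have "m - int j < N" by linarith
    then show "W j = 0" using lC unfolding W_def by auto
  qed
  define c where "c = (of_nat q - of_nat s / of_nat T :: complex)"
  have c: "\<forall>j. ((of_nat (Suc q) - of_nat s / of_nat T) gchoose j :: complex) = (c gchoose j)
      + (case j of 0 \<Rightarrow> 0 | Suc j' \<Rightarrow> c gchoose j')"
  proof
    fix j show "((of_nat (Suc q) - of_nat s / of_nat T) gchoose j :: complex) = (c gchoose j)
      + (case j of 0 \<Rightarrow> 0 | Suc j' \<Rightarrow> c gchoose j')"
    proof (cases j)
      case (Suc j')
      have e: "(of_nat (Suc q) - of_nat s / of_nat T :: complex) = c + 1" by (simp add: c_def)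
      have X: "((of_nat (Suc q) - of_nat s / of_nat T) gchoose j :: complex) = (c gchoose j') + (c gchoose j)"
        unfolding e Suc by (rule gbinomial_Suc_Suc)
      show ?thesis unfolding X using Suc by simp
    qed simp
  qed
  have "expC sc T s (Suc q) C m \<gamma> = Sum_any (\<lambda>j. sc ((of_nat (Suc q) - of_nat s / of_nat T) gchoose j) (W j))"
    unfolding expC_def W_def ..
  also have "\<dots> = Sum_any (\<lambda>j. sc (c gchoose j) (W j)) + Sum_any (\<lambda>j. sc (c gchoose j) (W (Suc j)))"
    by (rule SHIFT[OF WK c])
  also have "Sum_any (\<lambda>j. sc (c gchoose j) (W j)) = expC sc T s q C m (\<gamma> - int T)"
    unfolding expC_def W_def c_def by (intro Sum_any.cong) (simp add: algebra_simps)
  also have "Sum_any (\<lambda>j. sc (c gchoose j) (W (Suc j))) = expC sc T s q C (m - 1) \<gamma>"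
    unfolding expC_def W_def c_def by (intro Sum_any.cong) (simp add: algebra_simps)
  finally show ?thesis .
qed

lemma shift_all:
  assumes lX: "\<forall>i j. j < N1 \<longrightarrow> X i j = 0" and lC: "\<forall>i j. j < N2 \<longrightarrow> C i j = 0" and T: "T > 0"
    and eq: "substA sc T s q X = expC sc T s q C"
  shows "substA sc T s (q + d) X = expC sc T s (q + d) C"
proof (induction d)
  case 0 then show ?case using eq by simp
next
  case (Suc d)
  show ?case
  proof (intro ext)
    fix m \<gamma>
    show "substA sc T s (q + Suc d) X m \<gamma> = expC sc T s (q + Suc d) C m \<gamma>"
      using substA_Suc[OF lX T, of s "q + d" m \<gamma>] expC_Suc[OF lC, of T s "q + d" m \<gamma>] Suc
      by (simp add: add.commute)
  qed
qed

lemma inj_series: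
  assumes l1: "\<forall>i j. j < N \<longrightarrow> D1 i j = 0" and l2: "\<forall>i j. j < N \<longrightarrow> D2 i j = 0"
    and eq: "\<And>\<beta> m. Sum_any (\<lambda>j::nat. sc (c gchoose j) (D1 (\<beta> + int T * int j) (m - int j)))
              = Sum_any (\<lambda>j. sc (c gchoose j) (D2 (\<beta> + int T * int j) (m - int j)))"
  shows "D1 = D2"
proof -
  have main: "\<forall>m < N + int K. \<forall>\<beta>. D1 \<beta> m = D2 \<beta> m" for K
  proof (induction K)
    case 0 then show ?case using l1 l2 by simp
  next
    case (Suc K)
    show ?case
    proof (intro allI impI)
      fix m \<beta> assume m: "m < N + int (Suc K)"
      show "D1 \<beta> m = D2 \<beta> m"
      proof (cases "m < N + int K")
        case True then show ?thesis using Suc.IH by blast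
      next
        case False
        then have mK: "m = N + int K" using m by simp
        define f1 where "f1 j = sc (c gchoose j) (D1 (\<beta> + int T * int j) (m - int j))" for j
        define f2 where "f2 j = sc (c gchoose j) (D2 (\<beta> + int T * int j) (m - int j))" for j
        have z1: "Sum_any f1 = (\<Sum>j\<le>Suc K. f1 j)"
          by (rule SA_bound_nat[OF vs]) (use l1 mK in \<open>auto simp: f1_def\<close>)
        have z2: "Sum_any f2 = (\<Sum>j\<le>Suc K. f2 j)"
          by (rule SA_bound_nat[OF vs]) (use l2 mK in \<open>auto simp: f2_def\<close>)
        have s: "f1 (Suc j) = f2 (Suc j)" for j
        proof -
          have "m - int (Suc j) < N + int K" using mK by simp
          then show ?thesis using Suc.IH unfolding f1_def f2_def by simp
        qed
        have "f1 0 + (\<Sum>j\<le>K. f1 (Suc j)) = f2 0 + (\<Sum>j\<le>K. f2 (Suc j))"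
          using eq[of \<beta> m] unfolding z1[unfolded f1_def] z2[unfolded f2_def] sum.atMost_Suc_shift
          by (simp add: f1_def f2_def)
        then have "f1 0 = f2 0" using s by simp
        then show ?thesis by (simp add: f1_def f2_def)
      qed
    qed
  qed
  show ?thesis
  proof (intro ext)
    fix \<beta> m
    have "m < N + int (nat (m - N) + 1)" by simp
    then show "D1 \<beta> m = D2 \<beta> m" using main by blast
  qed
qed

lemma laurent_common:
  assumes "laurent2 D1" "laurent2 D2"
  shows "\<exists>N. (\<forall>i j. j < N \<longrightarrow> D1 i j = 0) \<and> (\<forall>i j. j < N \<longrightarrow> D2 i j = 0)"
proof -
  obtain N1 where "\<forall>i j. j < N1 \<longrightarrow> D1 i j = 0" using assms(1) unfolding laurent2_def by blast
  moreover obtain N2 where "\<forall>i j. j < N2 \<longrightarrow> D2 i j = 0" using assms(2) unfolding laurent2_def by blast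
  ultimately show ?thesis by (intro exI[of _ "min N1 N2"]) auto
qed

lemma deltaC_inj:
  assumes "laurent2 D1" "laurent2 D2" and T: "T > 0"
    and eq: "deltaC sc T s D1 = deltaC sc T s D2"
  shows "D1 = D2"
proof -
  obtain N where N: "\<forall>i j. j < N \<longrightarrow> D1 i j = 0" "\<forall>i j. j < N \<longrightarrow> D2 i j = 0"
    using laurent_common[OF assms(1,2)] by blast
  have form: "deltaC sc T s D m (int s - int T) (\<beta> - int s)
     = Sum_any (\<lambda>j::nat. sc ((- (of_nat s / of_nat T)) gchoose j) (D (\<beta> + int T * int j) (m - int j)))" for D \<beta> m
  proof -
    have d: "(int s - int T - int s) div int T = -1" using T by (simp add: zdiv_zminus1_eq_if)
    have md: "(int s - int T - int s) mod int T = 0" by simp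
    show ?thesis unfolding deltaC_def Let_def d md by (simp add: algebra_simps)
  qed
  show ?thesis
  proof (rule inj_series[OF N])
    fix \<beta> m
    show "Sum_any (\<lambda>j::nat. sc ((- (of_nat s / of_nat T)) gchoose j) (D1 (\<beta> + int T * int j) (m - int j)))
        = Sum_any (\<lambda>j::nat. sc ((- (of_nat s / of_nat T)) gchoose j) (D2 (\<beta> + int T * int j) (m - int j)))"
      using form[of D1 m \<beta>] form[of D2 m \<beta>] eq by simp
  qed
qed

lemma expC_inj:
  assumes "laurent2 D1" "laurent2 D2"
    and eq: "expC sc T s q D1 = expC sc T s q D2"
  shows "D1 = D2"
proof -
  obtain N where N: "\<forall>i j. j < N \<longrightarrow> D1 i j = 0" "\<forall>i j. j < N \<longrightarrow> D2 i j = 0"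
    using laurent_common[OF assms(1,2)] by blast
  have form: "expC sc T s q D m (\<beta> + int T * int q - int s)
     = Sum_any (\<lambda>j::nat. sc ((of_nat q - of_nat s / of_nat T) gchoose j) (D (\<beta> + int T * int j) (m - int j)))" for D \<beta> m
    unfolding expC_def by (simp add: algebra_simps)
  show ?thesis
  proof (rule inj_series[OF N])
    fix \<beta> m
    show "Sum_any (\<lambda>j::nat. sc ((of_nat q - of_nat s / of_nat T) gchoose j) (D1 (\<beta> + int T * int j) (m - int j)))
        = Sum_any (\<lambda>j::nat. sc ((of_nat q - of_nat s / of_nat T) gchoose j) (D2 (\<beta> + int T * int j) (m - int j)))"
      using form[of D1 m \<beta>] form[of D2 m \<beta>] eq by simp
  qed
qed

end

definition CsF :: "(complex \<Rightarrow> 'm \<Rightarrow> 'm) \<Rightarrow> nat \<Rightarrow> (int \<Rightarrow> int \<Rightarrow> 'm::ab_group_add)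
    \<Rightarrow> nat \<Rightarrow> nat \<Rightarrow> nat \<Rightarrow> nat \<Rightarrow> int \<Rightarrow> int \<Rightarrow> 'm" where
  "CsF sc T G p r k = (\<lambda>s. iota2d sc T (proj1 T ((s + p) mod T) G) p r k)"

lemma proj_ext:
  assumes T: "0 < T" and eq: "\<forall>s<T. proj1 T s X = proj1 T s Y"
  shows "X = Y"
proof (intro ext)
  fix a b
  define s where "s = nat (a mod int T)"
  have sT: "s < T" using T unfolding s_def by (simp add: nat_less_iff)
  have as: "a mod int T = int s" using T unfolding s_def by simp
  have "proj1 T s X a b = proj1 T s Y a b" using eq sT by simp
  then show "X a b = Y a b" using as by (simp add: proj1_def)
qed

lemma laurent_proj: "laurent2 A \<Longrightarrow> \<exists>N. \<forall>i j. j < N \<longrightarrow> proj1 T s A i j = 0"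
proof -
  assume "laurent2 A"
  then obtain N where "\<forall>i j. j < N \<longrightarrow> A i j = 0" unfolding laurent2_def by blast
  then show ?thesis by (intro exI[of _ N]) (simp add: proj1_def)
qed

context
  fixes sc :: "complex \<Rightarrow> 'm::ab_group_add \<Rightarrow> 'm"
  assumes vs: "vector_space sc"
begin

interpretation V: vector_space sc by (rule vs)

lemma laurent_iota2d:
  assumes H: "psupp H"
  shows "laurent2 (iota2d sc T H p r k)"
  unfolding laurent2_def
proof (intro conjI allI)
  show "\<exists>N. \<forall>i j. j < N \<longrightarrow> iota2d sc T H p r k i j = 0"
    by (intro exI[of _ "- int k"]) (simp add: iota2d_def)
  fix n
  show "\<exists>N. \<forall>i. i < N \<longrightarrow> iota2d sc T H p r k i n = 0"
  proof (intro exI[of _ "- (int r + int p + int T * (n + int k))"] allI impI)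
    fix i assume i: "i < - (int r + int p + int T * (n + int k))"
    have "H a (i + int r + int p + int T * (n + int k) - a) = 0" for a
    proof (rule ccontr)
      assume "H a (i + int r + int p + int T * (n + int k) - a) \<noteq> 0"
      then have "0 \<le> a \<and> 0 \<le> i + int r + int p + int T * (n + int k) - a" by (rule psupp_nz[OF H])
      then show False using i by linarith
    qed
    then show "iota2d sc T H p r k i n = 0" by (simp add: iota2d_def)
  qed
qed

lemma sum_CsF:
  assumes T: "0 < T" and G: "psupp G"
  shows "(\<lambda>b n. \<Sum>s<T. CsF sc T G p r k s b n) = iota2d sc T G p r k"
proof (intro ext)
  fix b n
  show "(\<Sum>s<T. CsF sc T G p r k s b n) = iota2d sc T G p r k b n"
  proof (cases "n + int k < 0")
    case True then show ?thesis by (simp add: CsF_def iota2d_def)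
  next
    case False
    define S where "S = b + int r + int p + int T * (n + int k)"
    define c where "c a = (of_int (a - int p) / of_nat T :: complex) gchoose nat (n + int k)" for a
    have fin: "Sum_any (\<lambda>a. sc (c a) (H a (S - a))) = (\<Sum>a\<in>{0..S}. sc (c a) (H a (S - a)))"
      if "psupp H" for H
      by (rule SA_bound_int[OF vs]) (use psupp_nz[OF that] in fastforce)
    have e: "iota2d sc T H p r k b n = (\<Sum>a\<in>{0..S}. sc (c a) (H a (S - a)))" if "psupp H" for H
      unfolding iota2d_def using False fin[OF that] by (simp add: S_def c_def)
    have "(\<Sum>s<T. CsF sc T G p r k s b n)
        = (\<Sum>s<T. \<Sum>a\<in>{0..S}. sc (c a) (proj1 T ((s + p) mod T) G a (S - a)))"
      unfolding CsF_def by (simp add: e proj_psupp[OF G])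
    also have "\<dots> = (\<Sum>a\<in>{0..S}. sc (c a) (\<Sum>s<T. proj1 T ((s + p) mod T) G a (S - a)))"
      by (simp add: V.scale_sum_right sum.swap[of _ "{..<T}"])
    also have "\<dots> = (\<Sum>a\<in>{0..S}. sc (c a) (G a (S - a)))"
      by (simp add: sum_proj[OF vs T])
    also have "\<dots> = iota2d sc T G p r k b n" by (simp add: e[OF G])
    finally show ?thesis .
  qed
qed

lemma deltaC_zero:
  assumes "\<forall>i j. j < N \<longrightarrow> D i j = 0" and "m < N"
  shows "deltaC sc T s D m \<alpha> \<beta> = 0"
  using assms by (simp add: deltaC_def Let_def)

lemma DIproj:
  assumes G: "psupp G" and T: "0 < T" and s: "s < T"
  shows "(\<lambda>m \<alpha> \<beta>. deltaA sc T (proj1 T s (iota12 sc T G p r k)) m \<alpha> \<beta>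
             - deltaB sc T (proj1 T s (iota21 sc T G p r k)) m \<alpha> \<beta>)
         = deltaC sc T s (CsF sc T G p r k s)"
  unfolding proj1_iota12[OF vs T s] proj1_iota21[OF vs T s] CsF_def
  by (intro ext DI[OF vs] proj_psupp[OF G] proj_hom T)

lemma F_C2:
  assumes T: "0 < T" and G: "psupp G" and A: "iota12 sc T G p r k = A"
    and B: "iota21 sc T G p r k = B" and C: "iota2d sc T G p r k = C"
  shows "isC2 sc T A B C (CsF sc T G p r k)"
  unfolding isC2_def
proof (intro conjI allI impI)
  fix s assume "s < T"
  show "laurent2 (CsF sc T G p r k s)" unfolding CsF_def by (intro laurent_iota2d proj_psupp G)
next
  show "(\<lambda>b n. \<Sum>s<T. CsF sc T G p r k s b n) = C" using sum_CsF[OF T G] C by simp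
next
  fix s assume s: "s < T"
  show "(\<lambda>m \<alpha> \<beta>. deltaA sc T (proj1 T s A) m \<alpha> \<beta> - deltaB sc T (proj1 T s B) m \<alpha> \<beta>)
     = deltaC sc T s (CsF sc T G p r k s)"
    using DIproj[OF G T s, where p=p and r=r and k=k] A B by simp
qed

lemma F_C2_uniq:
  assumes T: "0 < T" and G: "psupp G" and A: "iota12 sc T G p r k = A"
    and B: "iota21 sc T G p r k = B" and C2: "isC2 sc T A B C Cs"
  shows "\<forall>s<T. Cs s = CsF sc T G p r k s"
proof (intro allI impI)
  fix s assume s: "s < T"
  have l1: "laurent2 (Cs s)" using C2 s unfolding isC2_def by blast
  have l2: "laurent2 (CsF sc T G p r k s)" unfolding CsF_def by (intro laurent_iota2d proj_psupp G)
  have "deltaC sc T s (Cs s) = (\<lambda>m \<alpha> \<beta>. deltaA sc T (proj1 T s A) m \<alpha> \<beta> - deltaB sc T (proj1 T s B) m \<alpha> \<beta>)"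
    using C2 s unfolding isC2_def by simp
  also have "\<dots> = deltaC sc T s (CsF sc T G p r k s)"
    using DIproj[OF G T s, where p=p and r=r and k=k] A B by simp
  finally show "Cs s = CsF sc T G p r k s" by (rule deltaC_inj[OF vs l1 l2 T])
qed

lemma F_C3:
  assumes T: "0 < T" and G: "psupp G" and A: "iota12 sc T G p r k = A"
    and B: "iota21 sc T G p r k = B" and C: "iota2d sc T G p r k = C"
  shows "isC3 sc T A B C (CsF sc T G p r k)"
proof -
  have a: "\<forall>s<T. laurent2 (CsF sc T G p r k s)"
    unfolding CsF_def by (intro allI impI laurent_iota2d proj_psupp G)
  have b: "(\<lambda>b n. \<Sum>s<T. CsF sc T G p r k s b n) = C" using sum_CsF[OF T G] C by simp
  have c: "polymul sc T A 0 0 (Suc k) = polymul sc T B 0 0 (Suc k)"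
    using loc_F[OF vs G T, where k=k and l="Suc k" and p=p and r=r] A B by simp
  have d: "\<forall>s<T. substA sc T s (Suc p) (proj1 T s A) = expC sc T s (Suc p) (CsF sc T G p r k s)"
  proof (intro allI impI)
    fix s assume s: "s < T"
    show "substA sc T s (Suc p) (proj1 T s A) = expC sc T s (Suc p) (CsF sc T G p r k s)"
      unfolding A[symmetric] proj1_iota12[OF vs T s] CsF_def
      by (rule sub_id[OF vs proj_psupp[OF G] proj_hom T s]) simp
  qed
  show ?thesis unfolding isC3_def
    by (rule exI[of _ "k + 1"], rule exI[of _ "p + 1"], intro conjI) (simp_all add: a b c d)
qed

lemma F_C3_uniq:
  assumes T: "0 < T" and G: "psupp G" and A: "iota12 sc T G p r k = A"
    and lA: "laurent2 A" and C3: "isC3 sc T A B C Cs"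
  shows "\<forall>s<T. Cs s = CsF sc T G p r k s"
proof (intro allI impI)
  fix s assume s: "s < T"
  obtain l q where lq: "\<forall>s<T. laurent2 (Cs s)"
    "\<forall>s<T. substA sc T s q (proj1 T s A) = expC sc T s q (Cs s)"
    using C3 unfolding isC3_def by blast
  have l1: "laurent2 (Cs s)" using lq s by blast
  have l2: "laurent2 (CsF sc T G p r k s)" unfolding CsF_def by (intro laurent_iota2d proj_psupp G)
  obtain N1 where N1: "\<forall>i j. j < N1 \<longrightarrow> proj1 T s A i j = 0" using laurent_proj[OF lA] by blast
  obtain N2 where N2: "\<forall>i j. j < N2 \<longrightarrow> Cs s i j = 0" using l1 unfolding laurent2_def by blast
  have "expC sc T s (q + (p + 1)) (Cs s) = substA sc T s (q + (p + 1)) (proj1 T s A)"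
    using shift_all[OF vs N1 N2 T, of s q "p + 1"] lq s by simp
  also have "\<dots> = expC sc T s (q + (p + 1)) (CsF sc T G p r k s)"
    unfolding A[symmetric] proj1_iota12[OF vs T s] CsF_def
    by (rule sub_id[OF vs proj_psupp[OF G] proj_hom T s]) simp
  finally show "Cs s = CsF sc T G p r k s" by (rule expC_inj[OF vs l1 l2])
qed

lemma C2_loc:
  assumes T: "0 < T" and C2: "isC2 sc T A B C Cs"
  shows "\<exists>l>0. polymul sc T A 0 0 l = polymul sc T B 0 0 l"
proof -
  have "\<forall>s<T. \<exists>N. \<forall>i j. j < N \<longrightarrow> Cs s i j = 0" using C2 unfolding isC2_def laurent2_def by blast
  then obtain f where f: "\<forall>s<T. \<forall>i j. j < f s \<longrightarrow> Cs s i j = 0" by metis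
  define N where "N = - (\<Sum>s<T. \<bar>f s\<bar>)"
  have Nf: "N \<le> f s" if "s < T" for s
  proof -
    have "\<bar>f s\<bar> \<le> (\<Sum>s<T. \<bar>f s\<bar>)" by (rule member_le_sum) (use that in auto)
    then show ?thesis unfolding N_def by linarith
  qed
  define l where "l = nat (- N) + 1"
  have "proj1 T s (polymul sc T A 0 0 l) = proj1 T s (polymul sc T B 0 0 l)" if s: "s < T" for s
  proof (intro ext)
    fix a b
    have "deltaA sc T (proj1 T s A) (- int l - 1) a b - deltaB sc T (proj1 T s B) (- int l - 1) a b
        = deltaC sc T s (Cs s) (- int l - 1) a b"
      using C2 s unfolding isC2_def by (metis (no_types, lifting))
    also have "\<dots> = 0"
    proof (rule deltaC_zero)
      show "\<forall>i j. j < N \<longrightarrow> Cs s i j = 0" using f Nf s by fastforce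
      show "- int l - 1 < N" unfolding l_def by linarith
    qed
    finally show "proj1 T s (polymul sc T A 0 0 l) a b = proj1 T s (polymul sc T B 0 0 l) a b"
      unfolding polymul_proj[OF vs, symmetric] deltaA_polymul[OF vs, where X="proj1 T s A", symmetric]
        deltaB_polymul[OF vs, where Y="proj1 T s B", symmetric]
      by simp
  qed
  then have "polymul sc T A 0 0 l = polymul sc T B 0 0 l" by (intro proj_ext[OF T]) blast
  then show ?thesis unfolding l_def by (intro exI[of _ "nat (- N) + 1"]) simp
qed

end

theorem mainTheorem1:
  fixes sc :: "complex \<Rightarrow> 'm::ab_group_add \<Rightarrow> 'm"
    and T :: nat
    and A B C :: "int \<Rightarrow> int \<Rightarrow> 'm"
  assumes "vector_space sc"
    and "T > 0"
    and "laurent2 A"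
    and "laurent2 (\<lambda>b a. B a b)"
    and "laurent2 C"
  shows "((\<exists>G p r k. isF sc T A B C G p r k) \<longleftrightarrow> (\<exists>Cs. isC2 sc T A B C Cs))
    \<and> ((\<exists>Cs. isC2 sc T A B C Cs) \<longleftrightarrow> (\<exists>Cs. isC3 sc T A B C Cs))
    \<and> (\<forall>G p r k G' p' r' k'. isF sc T A B C G p r k \<and> isF sc T A B C G' p' r' k'
          \<longrightarrow> Feq sc T G p r k G' p' r' k')
    \<and> (\<forall>Cs Cs'. (isC2 sc T A B C Cs \<or> isC3 sc T A B C Cs)
          \<and> (isC2 sc T A B C Cs' \<or> isC3 sc T A B C Cs')
          \<longrightarrow> (\<forall>s<T. Cs s = Cs' s))"
proof -
  note vs = assms(1) and T = assms(2) and lA = assms(3) and lB = assms(4)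
  have sumC: "C = iota2d sc T G p r k"
    if G: "psupp G" and sC: "(\<lambda>b n. \<Sum>s<T. Cs s b n) = C" and eqs: "\<forall>s<T. Cs s = CsF sc T G p r k s"
    for G p r k Cs
  proof -
    have "C = (\<lambda>b n. \<Sum>s<T. Cs s b n)" using sC by simp
    also have "\<dots> = (\<lambda>b n. \<Sum>s<T. CsF sc T G p r k s b n)"
      using eqs by (intro ext sum.cong) auto
    also have "\<dots> = iota2d sc T G p r k" by (rule sum_CsF[OF vs T G])
    finally show ?thesis .
  qed
  have C2toF: "\<exists>G p r k. isF sc T A B C G p r k \<and> (\<forall>s<T. Cs s = CsF sc T G p r k s)"
    if C2: "isC2 sc T A B C Cs" for Cs
  proof -
    obtain l where l: "polymul sc T A 0 0 l = polymul sc T B 0 0 l"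
      using C2_loc[OF vs T C2] by blast
    obtain G p r where G: "psupp G" "iota12 sc T G p r l = A" "iota21 sc T G p r l = B"
      using loc_to_G[OF vs T lA lB l] by blast
    have eqs: "\<forall>s<T. Cs s = CsF sc T G p r l s" by (rule F_C2_uniq[OF vs T G C2])
    have "(\<lambda>b n. \<Sum>s<T. Cs s b n) = C" using C2 unfolding isC2_def by blast
    then have "C = iota2d sc T G p r l" using sumC G(1) eqs by blast
    then show ?thesis using G eqs unfolding isF_def by metis
  qed
  have C3toF: "\<exists>G p r k. isF sc T A B C G p r k \<and> (\<forall>s<T. Cs s = CsF sc T G p r k s)"
    if C3: "isC3 sc T A B C Cs" for Cs
  proof -
    obtain l where l: "polymul sc T A 0 0 l = polymul sc T B 0 0 l"
      using C3 unfolding isC3_def by blast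
    obtain G p r where G: "psupp G" "iota12 sc T G p r l = A" "iota21 sc T G p r l = B"
      using loc_to_G[OF vs T lA lB l] by blast
    have eqs: "\<forall>s<T. Cs s = CsF sc T G p r l s" by (rule F_C3_uniq[OF vs T G(1,2) lA C3])
    have "(\<lambda>b n. \<Sum>s<T. Cs s b n) = C" using C3 unfolding isC3_def by blast
    then have "C = iota2d sc T G p r l" using sumC G(1) eqs by blast
    then show ?thesis using G eqs unfolding isF_def by metis
  qed
  have FtoC2: "isC2 sc T A B C (CsF sc T G p r k)" if "isF sc T A B C G p r k" for G p r k
    using that unfolding isF_def by (intro F_C2[OF vs T]) auto
  have FtoC3: "isC3 sc T A B C (CsF sc T G p r k)" if "isF sc T A B C G p r k" for G p r k
    using that unfolding isF_def by (intro F_C3[OF vs T]) auto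
  have Funiq: "\<forall>s<T. Cs s = CsF sc T G p r k s"
    if F: "isF sc T A B C G p r k" and CC: "isC2 sc T A B C Cs \<or> isC3 sc T A B C Cs" for G p r k Cs
  proof -
    have G: "psupp G" "iota12 sc T G p r k = A" "iota21 sc T G p r k = B"
      using F unfolding isF_def by auto
    show ?thesis
    proof (cases "isC2 sc T A B C Cs")
      case True then show ?thesis by (rule F_C2_uniq[OF vs T G])
    next
      case False
      then have "isC3 sc T A B C Cs" using CC by blast
      then show ?thesis by (rule F_C3_uniq[OF vs T G(1,2) lA])
    qed
  qed
  have P1: "(\<exists>G p r k. isF sc T A B C G p r k) \<longleftrightarrow> (\<exists>Cs. isC2 sc T A B C Cs)"
    using FtoC2 C2toF by blast
  have P2: "(\<exists>Cs. isC2 sc T A B C Cs) \<longleftrightarrow> (\<exists>Cs. isC3 sc T A B C Cs)"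
  proof
    assume "\<exists>Cs. isC2 sc T A B C Cs"
    then obtain Cs where "isC2 sc T A B C Cs" by blast
    then obtain G p r k where "isF sc T A B C G p r k" using C2toF by blast
    then show "\<exists>Cs. isC3 sc T A B C Cs" using FtoC3 by blast
  next
    assume "\<exists>Cs. isC3 sc T A B C Cs"
    then obtain Cs where "isC3 sc T A B C Cs" by blast
    then obtain G p r k where "isF sc T A B C G p r k" using C3toF by blast
    then show "\<exists>Cs. isC2 sc T A B C Cs" using FtoC2 by blast
  qed
  have P3: "\<forall>G p r k G' p' r' k'. isF sc T A B C G p r k \<and> isF sc T A B C G' p' r' k'
          \<longrightarrow> Feq sc T G p r k G' p' r' k'"
  proof (intro allI impI)
    fix G p r k G' p' r' k'
    assume FF: "isF sc T A B C G p r k \<and> isF sc T A B C G' p' r' k'"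
    then have G: "psupp G" "iota12 sc T G p r k = A" and G': "psupp G'" "iota12 sc T G' p' r' k' = A"
      unfolding isF_def by auto
    have e1: "polymul sc T A p r k = G" using polymul_iota12[OF vs G(1) T, where p=p and r=r and k=k] G(2) by simp
    have e2: "polymul sc T A p' r' k' = G'" using polymul_iota12[OF vs G'(1) T, where p=p' and r=r' and k=k'] G'(2) by simp
    have "polymul sc T G p' r' k' = polymul sc T G' p r k"
      unfolding e1[symmetric] e2[symmetric] by (rule polymul_comm[OF vs])
    then show "Feq sc T G p r k G' p' r' k'" unfolding Feq_def .
  qed
  have P4: "\<forall>Cs Cs'. (isC2 sc T A B C Cs \<or> isC3 sc T A B C Cs)
          \<and> (isC2 sc T A B C Cs' \<or> isC3 sc T A B C Cs')
          \<longrightarrow> (\<forall>s<T. Cs s = Cs' s)"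
  proof (intro allI impI)
    fix Cs Cs' s
    assume CC: "(isC2 sc T A B C Cs \<or> isC3 sc T A B C Cs) \<and> (isC2 sc T A B C Cs' \<or> isC3 sc T A B C Cs')"
      and s: "s < T"
    obtain G p r k where F: "isF sc T A B C G p r k"
      using CC C2toF C3toF by blast
    have "Cs s = CsF sc T G p r k s" using Funiq[OF F] CC s by blast
    moreover have "Cs' s = CsF sc T G p r k s" using Funiq[OF F] CC s by blast
    ultimately show "Cs s = Cs' s" by simp
  qed
  show ?thesis using P1 P2 P3 P4 by blast
qed

end
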